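(* Let $u_0,u_1\in C_0^\infty(\mathbb R^3)$ be radial with support in $\{|x|\le M\}$, $M>0$, and let $F_0$ and $\tau_0$ be as defined below. Then the problem $$2\partial_{q\tau}V+V\partial_q^2V-\partial_qV\,\partial_q^2V=0,\quad (q,\tau)\in\mathbb R\times[0,\infty),\qquad V(q,0)=F_0(q),\qquad \operatorname{supp}V\subseteq\{q\le M\},$$ has a $C^\infty$ solution $V(q,\tau)$ for $0\le\tau<\tau_0$.
   Context: Write $u_0(r),u_1(r)$ for the radial profiles, extended evenly to $[-M,M]$ (they are smooth functions of $r^2$) and by zero beyond. Define $F_0(s)=\tfrac12\big(s\,u_0(s)+\int_s^\infty \rho\,u_1(\rho)\,d\rho\big)$ for $s\in\mathbb R$. For $s\in[-M,M]$ with $F_0'(s)\ne0$ and $\frac{F_0''(s)}{F_0''(s)-F_0'(s)}>0$ set $\tau(s)=\frac{2}{F_0'(s)}\ln\frac{F_0''(s)}{F_0''(s)-F_0'(s)}$. Let $A=\{s\in(-M,M): F_0'(s)\ne0,\ \frac{F_0''(s)}{F_0''(s)-F_0'(s)}>0,\ \tau(s)>0\}$, $B=\{s\in(-M,M):F_0'(s)=0,\ F_0''(s)>0\}$, and $\tau_0=\min\{\min_{s\in A}\tau(s),\ \min_{s\in B}2/F_0''(s)\}$. *)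

theory Defs
  imports "HOL-Analysis.Analysis"
begin

fun C_k :: "nat \<Rightarrow> ('a::euclidean_space \<Rightarrow> real) \<Rightarrow> bool" where
  "C_k 0 f \<longleftrightarrow> continuous_on UNIV f"
| "C_k (Suc k) f \<longleftrightarrow> f differentiable_on UNIV \<and>
     (\<forall>b\<in>Basis. C_k k (\<lambda>x. frechet_derivative f (at x) b))"

definition smooth :: "('a::euclidean_space \<Rightarrow> real) \<Rightarrow> bool" where
  "smooth f \<longleftrightarrow> (\<forall>k. C_k k f)"

definition radial :: "('a::real_normed_vector \<Rightarrow> real) \<Rightarrow> bool" where
  "radial f \<longleftrightarrow> (\<forall>x y. norm x = norm y \<longrightarrow> f x = f y)"

text \<open>Radial profile, extended evenly to the real line.\<close>
definition profile :: "(real^3 \<Rightarrow> real) \<Rightarrow> real \<Rightarrow> real" where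
  "profile u s = u (\<bar>s\<bar> *\<^sub>R axis 1 1)"

definition F0 :: "(real^3 \<Rightarrow> real) \<Rightarrow> (real^3 \<Rightarrow> real) \<Rightarrow> real \<Rightarrow> real" where
  "F0 u0 u1 s = (1/2) * (s * profile u0 s + integral {s..} (\<lambda>\<rho>. \<rho> * profile u1 \<rho>))"

definition tau_fun :: "(real \<Rightarrow> real) \<Rightarrow> real \<Rightarrow> real" where
  "tau_fun F s = 2 / deriv F s * ln (deriv (deriv F) s / (deriv (deriv F) s - deriv F s))"

definition setA :: "(real \<Rightarrow> real) \<Rightarrow> real \<Rightarrow> real set" where
  "setA F M = {s. -M < s \<and> s < M \<and> deriv F s \<noteq> 0 \<and>
       deriv (deriv F) s / (deriv (deriv F) s - deriv F s) > 0 \<and> tau_fun F s > 0}"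

definition setB :: "(real \<Rightarrow> real) \<Rightarrow> real \<Rightarrow> real set" where
  "setB F M = {s. -M < s \<and> s < M \<and> deriv F s = 0 \<and> deriv (deriv F) s > 0}"

text \<open>tau_0 as an extended real: the infimum (= minimum when attained) of the
  candidate times; +infinity if there are none.\<close>
definition tau0 :: "(real \<Rightarrow> real) \<Rightarrow> real \<Rightarrow> ereal" where
  "tau0 F M = Inf ((\<lambda>s. ereal (tau_fun F s)) ` setA F M \<union>
                   (\<lambda>s. ereal (2 / deriv (deriv F) s)) ` setB F M)"

definition strip :: "ereal \<Rightarrow> (real \<times> real) set" where
  "strip T = {(q,t). 0 \<le> t \<and> ereal t < T}"

text \<open>D i j is the partial derivative d_q^i d_tau^j of V = D 0 0; smoothness on the
  half strip R x [0,T) (one-sided tau-derivatives at tau = 0): all partial derivatives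
  exist and are continuous on the strip.\<close>
definition smooth_derivs :: "ereal \<Rightarrow> (nat \<Rightarrow> nat \<Rightarrow> real \<Rightarrow> real \<Rightarrow> real) \<Rightarrow> bool" where
  "smooth_derivs T D \<longleftrightarrow>
     (\<forall>i j. continuous_on (strip T) (\<lambda>(q,t). D i j q t)) \<and>
     (\<forall>i j q t. (q,t) \<in> strip T \<longrightarrow>
        ((\<lambda>x. D i j x t) has_real_derivative D (Suc i) j q t) (at q) \<and>
        ((\<lambda>y. D i j q y) has_real_derivative D i (Suc j) q t)
            (at t within {y. 0 \<le> y \<and> ereal y < T}))"

end

theory Submission
  imports Defs
begin


abbreviation Y :: "ereal \<Rightarrow> real set" where "Y T \<equiv> {y. 0 \<le> y \<and> ereal y < T}"

lemma strip_iff[simp]: "(x,t) \<in> strip T \<longleftrightarrow> t \<in> Y T"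
  by (simp add: strip_def)

lemma Y_sub: assumes "t \<in> Y T" "t \<le> s" "s \<le> t'" "t' \<in> Y T" shows "s \<in> Y T"
proof -
  have "ereal s \<le> ereal t'" using assms(3) by simp
  hence "ereal s < T" using assms(4) by (metis mem_Collect_eq order_le_less_trans)
  thus ?thesis using assms(1,2) by simp
qed

lemma Y_sub2: assumes "0 \<le> t" "t \<le> s" "s \<le> t'" "ereal t' < T" shows "s \<in> Y T"
proof -
  have "ereal s \<le> ereal t'" using assms(3) by simp
  hence "ereal s < T" using assms(4) by (metis order_le_less_trans)
  thus ?thesis using assms(1,2) by simp
qed

lemma Y_bot: assumes "t \<in> Y T" shows "at t within Y T \<noteq> bot"
proof -
  from assms have "ereal t < T" by simp
  then obtain t' where t': "ereal t < ereal t'" "ereal t' < T"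
    using ereal_dense2 by metis
  hence tt: "t < t'" by simp
  have sub: "{t..t'} \<subseteq> Y T"
  proof
    fix x assume "x \<in> {t..t'}" thus "x \<in> Y T" using assms t' Y_sub2[of t x t' T] by auto
  qed
  have "t islimpt {t..t'}" using tt by simp
  hence "t islimpt Y T" using sub by (rule islimpt_subset)
  thus ?thesis by (simp add: trivial_limit_within)
qed

lemma Y_interior_deriv:
  assumes "(f has_real_derivative D) (at y within Y T)" "0 < y" "ereal y < T"
  shows "(f has_real_derivative D) (at y)"
proof -
  obtain y' where y': "ereal y < ereal y'" "ereal y' < T"
    using assms(3) ereal_dense2 by metis
  have sub: "{0<..<y'} \<subseteq> Y T"
  proof
    fix x assume "x \<in> {0<..<y'}" thus "x \<in> Y T" using y' Y_sub2[of 0 x y' T] by auto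
  qed
  have "(f has_real_derivative D) (at y within {0<..<y'})"
    using has_field_derivative_subset[OF assms(1) sub] .
  moreover have "y \<in> {0<..<y'}" using assms(2) y' by simp
  ultimately show ?thesis using at_within_open[of y "{0<..<y'}"] by simp
qed

lemma dist_pair_le: "dist (a::real, b::real) (c, d) \<le> \<bar>a - c\<bar> + \<bar>b - d\<bar>"
proof -
  have "(a-c)^2 + (b-d)^2 \<le> (\<bar>a - c\<bar> + \<bar>b - d\<bar>)^2"
    by (simp add: power2_sum)
  hence "sqrt ((a-c)^2 + (b-d)^2) \<le> sqrt ((\<bar>a - c\<bar> + \<bar>b - d\<bar>)^2)"
    by (rule real_sqrt_le_mono)
  thus ?thesis unfolding dist_Pair_Pair dist_real_def by simp
qed


definition dx_ok :: "ereal \<Rightarrow> (real \<Rightarrow> real \<Rightarrow> real) \<Rightarrow> (real \<Rightarrow> real \<Rightarrow> real) \<Rightarrow> bool" where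
  "dx_ok T H G \<longleftrightarrow> (\<forall>x t. t \<in> Y T \<longrightarrow> ((\<lambda>x. H x t) has_real_derivative G x t) (at x))"
definition dt_ok :: "ereal \<Rightarrow> (real \<Rightarrow> real \<Rightarrow> real) \<Rightarrow> (real \<Rightarrow> real \<Rightarrow> real) \<Rightarrow> bool" where
  "dt_ok T H G \<longleftrightarrow> (\<forall>x t. t \<in> Y T \<longrightarrow> ((\<lambda>y. H x y) has_real_derivative G x t) (at t within Y T))"

lemma mvt_t:
  assumes d: "\<And>y. y \<in> {a..b} \<Longrightarrow> (f has_real_derivative f' y) (at y within Y T)"
    and ab: "a < b" "a \<in> Y T" "b \<in> Y T"
  shows "\<exists>z. a < z \<and> z < b \<and> f b - f a = (b - a) * f' z"
proof -
  have sub: "{a..b} \<subseteq> Y T"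
  proof
    fix x assume "x \<in> {a..b}" thus "x \<in> Y T" using Y_sub[of a T x b] ab by auto
  qed
  have "continuous_on {a..b} f"
    by (rule DERIV_continuous_on[of _ _ f'], rule has_field_derivative_subset[OF d sub], assumption)
  moreover have "\<And>z. a < z \<Longrightarrow> z < b \<Longrightarrow> (f has_real_derivative f' z) (at z)"
  proof -
    fix z assume z: "a < z" "z < b"
    have "0 < z" using z ab by auto
    moreover have "ereal z < T" using ab z
      by (metis (mono_tags, lifting) ereal_less_eq(3) less_imp_le mem_Collect_eq order_le_less_trans)
    moreover have "(f has_real_derivative f' z) (at z within Y T)" using d z by auto
    ultimately show "(f has_real_derivative f' z) (at z)" using Y_interior_deriv by blast
  qed
  ultimately obtain l z where lz: "a < z" "z < b" "DERIV f z :> l" "f b - f a = (b - a) * l"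
    using MVT[OF ab(1)] by (metis real_differentiable_def)
  have "DERIV f z :> f' z" using \<open>\<And>z. a < z \<Longrightarrow> z < b \<Longrightarrow> _\<close> lz by blast
  hence "l = f' z" using lz(3) DERIV_unique by blast
  thus ?thesis using lz by blast
qed

lemma schwarz:
  fixes H Hx Ht Hxt Htx :: "real \<Rightarrow> real \<Rightarrow> real"
  assumes hx: "dx_ok T H Hx" and ht: "dt_ok T H Ht" and hxt: "dt_ok T Hx Hxt" and htx: "dx_ok T Ht Htx"
    and c1: "continuous_on (strip T) (\<lambda>(x,t). Hxt x t)"
    and c2: "continuous_on (strip T) (\<lambda>(x,t). Htx x t)"
    and t: "t \<in> Y T"
  shows "Hxt x t = Htx x t"
proof (rule ccontr)
  assume ne: "Hxt x t \<noteq> Htx x t"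
  define e where "e = \<bar>Hxt x t - Htx x t\<bar>"
  have e: "e > 0" using ne by (simp add: e_def)
  have xt: "(x,t) \<in> strip T" using t by simp
  obtain d1 where d1: "d1 > 0" "\<And>p. p \<in> strip T \<Longrightarrow> dist p (x,t) < d1 \<Longrightarrow>
      dist ((\<lambda>(x,t). Hxt x t) p) (Hxt x t) < e/2"
    using c1 xt e unfolding continuous_on_iff
    by (metis (no_types, lifting) case_prod_conv half_gt_zero)
  obtain d2 where d2: "d2 > 0" "\<And>p. p \<in> strip T \<Longrightarrow> dist p (x,t) < d2 \<Longrightarrow>
      dist ((\<lambda>(x,t). Htx x t) p) (Htx x t) < e/2"
    using c2 xt e unfolding continuous_on_iff
    by (metis (no_types, lifting) case_prod_conv half_gt_zero)
  have "ereal t < T" using t by simp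
  then obtain t' where t': "ereal t < ereal t'" "ereal t' < T" using ereal_dense2 by metis
  define h where "h = min (min d1 d2) (t' - t) / 4"
  have h: "h > 0" using d1 d2 t' by (simp add: h_def)
  have m: "min (min d1 d2) (t' - t) \<le> d1" "min (min d1 d2) (t' - t) \<le> d2" "min (min d1 d2) (t' - t) \<le> t' - t"
    by auto
  have tt': "t < t'" using t' by simp
  have h1: "2*h < d1" "2*h < d2" "t + h < t'" using m h unfolding h_def by linarith+
  have th: "t + h \<in> Y T" using Y_sub2[of t "t+h" t' T] t t' h1 h by auto
  have Yi: "\<And>y. y \<in> {t..t+h} \<Longrightarrow> y \<in> Y T" using Y_sub[of t T _ "t+h"] t th by auto
  define D where "D = H (x+h) (t+h) - H (x+h) t - H x (t+h) + H x t"
  obtain \<xi>1 where \<xi>1: "x < \<xi>1" "\<xi>1 < x + h"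
    "(H (x+h) (t+h) - H (x+h) t) - (H x (t+h) - H x t) = h * (Hx \<xi>1 (t+h) - Hx \<xi>1 t)"
  proof -
    have "\<exists>z. x < z \<and> z < x + h \<and> (\<lambda>\<xi>. H \<xi> (t+h) - H \<xi> t) (x+h) - (\<lambda>\<xi>. H \<xi> (t+h) - H \<xi> t) x
        = (x + h - x) * (Hx z (t+h) - Hx z t)"
      by (rule MVT2) (use h hx th t in \<open>auto simp: dx_ok_def intro!: derivative_eq_intros\<close>)
    thus ?thesis using that by auto
  qed
  obtain \<eta>1 where \<eta>1: "t < \<eta>1" "\<eta>1 < t + h" "Hx \<xi>1 (t+h) - Hx \<xi>1 t = h * Hxt \<xi>1 \<eta>1"
  proof -
    have "\<exists>z. t < z \<and> z < t + h \<and> (\<lambda>y. Hx \<xi>1 y) (t+h) - (\<lambda>y. Hx \<xi>1 y) t = (t + h - t) * Hxt \<xi>1 z"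
      by (rule mvt_t[of _ _ _ _ T]) (use hxt Yi h t th in \<open>auto simp: dt_ok_def\<close>)
    thus ?thesis using that by auto
  qed
  obtain \<eta>2 where \<eta>2: "t < \<eta>2" "\<eta>2 < t + h"
    "(H (x+h) (t+h) - H x (t+h)) - (H (x+h) t - H x t) = h * (Ht (x+h) \<eta>2 - Ht x \<eta>2)"
  proof -
    have "\<exists>z. t < z \<and> z < t + h \<and> (\<lambda>y. H (x+h) y - H x y) (t+h) - (\<lambda>y. H (x+h) y - H x y) t
        = (t + h - t) * (Ht (x+h) z - Ht x z)"
      by (rule mvt_t[of _ _ _ _ T]) (use ht Yi h t th in \<open>auto simp: dt_ok_def intro!: derivative_eq_intros\<close>)
    thus ?thesis using that by auto
  qed
  have \<eta>2Y: "\<eta>2 \<in> Y T" using Yi \<eta>2 by auto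
  obtain \<xi>2 where \<xi>2: "x < \<xi>2" "\<xi>2 < x + h" "Ht (x+h) \<eta>2 - Ht x \<eta>2 = h * Htx \<xi>2 \<eta>2"
  proof -
    have "\<exists>z. x < z \<and> z < x + h \<and> (\<lambda>\<xi>. Ht \<xi> \<eta>2) (x+h) - (\<lambda>\<xi>. Ht \<xi> \<eta>2) x = (x + h - x) * Htx z \<eta>2"
      by (rule MVT2) (use h htx \<eta>2Y in \<open>auto simp: dx_ok_def\<close>)
    thus ?thesis using that by auto
  qed
  have "h * (h * Hxt \<xi>1 \<eta>1) = h * (h * Htx \<xi>2 \<eta>2)"
    using \<xi>1(3) \<eta>1(3) \<eta>2(3) \<xi>2(3) by (simp add: algebra_simps)
  hence eq: "Hxt \<xi>1 \<eta>1 = Htx \<xi>2 \<eta>2" using h by simp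
  have p1: "(\<xi>1, \<eta>1) \<in> strip T" using Yi \<eta>1 by auto
  have p2: "(\<xi>2, \<eta>2) \<in> strip T" using \<eta>2Y by auto
  have "dist (\<xi>1, \<eta>1) (x, t) \<le> \<bar>\<xi>1 - x\<bar> + \<bar>\<eta>1 - t\<bar>" by (rule dist_pair_le)
  also have "\<dots> < 2*h" using \<xi>1 \<eta>1 by auto
  finally have "dist (\<xi>1, \<eta>1) (x, t) < d1" using h1 by linarith
  hence a1: "\<bar>Hxt \<xi>1 \<eta>1 - Hxt x t\<bar> < e/2" using d1(2)[OF p1] by (simp add: dist_real_def)
  have "dist (\<xi>2, \<eta>2) (x, t) \<le> \<bar>\<xi>2 - x\<bar> + \<bar>\<eta>2 - t\<bar>" by (rule dist_pair_le)
  also have "\<dots> < 2*h" using \<xi>2 \<eta>2 by auto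
  finally have "dist (\<xi>2, \<eta>2) (x, t) < d2" using h1 by linarith
  hence a2: "\<bar>Htx \<xi>2 \<eta>2 - Htx x t\<bar> < e/2" using d2(2)[OF p2] by (simp add: dist_real_def)
  have "Hxt x t - Htx x t = (Hxt x t - Hxt \<xi>1 \<eta>1) + (Htx \<xi>2 \<eta>2 - Htx x t)" using eq by simp
  hence "e \<le> \<bar>Hxt x t - Hxt \<xi>1 \<eta>1\<bar> + \<bar>Htx \<xi>2 \<eta>2 - Htx x t\<bar>"
    unfolding e_def by (metis abs_triangle_ineq)
  moreover have "\<bar>Hxt x t - Hxt \<xi>1 \<eta>1\<bar> < e/2" using a1 by (simp add: abs_minus_commute e_def)
  moreover have "\<bar>Htx \<xi>2 \<eta>2 - Htx x t\<bar> < e/2" using a2 by (simp add: e_def)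
  ultimately show False by linarith
qed


coinductive sm :: "ereal \<Rightarrow> (real \<Rightarrow> real \<Rightarrow> real) \<Rightarrow> bool" for T where
  smI: "continuous_on (strip T) (\<lambda>(x,t). H x t) \<Longrightarrow> dx_ok T H Hx \<Longrightarrow> dt_ok T H Ht \<Longrightarrow>
        sm T Hx \<Longrightarrow> sm T Ht \<Longrightarrow> sm T H"

definition Px :: "ereal \<Rightarrow> (real \<Rightarrow> real \<Rightarrow> real) \<Rightarrow> (real \<Rightarrow> real \<Rightarrow> real)" where
  "Px T H = (SOME G. dx_ok T H G \<and> sm T G)"
definition Pt :: "ereal \<Rightarrow> (real \<Rightarrow> real \<Rightarrow> real) \<Rightarrow> (real \<Rightarrow> real \<Rightarrow> real)" where
  "Pt T H = (SOME G. dt_ok T H G \<and> sm T G)"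

lemma sm_cont: "sm T H \<Longrightarrow> continuous_on (strip T) (\<lambda>(x,t). H x t)"
  by (subst (asm) sm.simps) blast

lemma sm_Px: assumes "sm T H" shows "dx_ok T H (Px T H)" "sm T (Px T H)"
proof -
  have "\<exists>G. dx_ok T H G \<and> sm T G" using assms by (subst (asm) sm.simps) blast
  hence "dx_ok T H (Px T H) \<and> sm T (Px T H)" unfolding Px_def by (rule someI_ex)
  thus "dx_ok T H (Px T H)" "sm T (Px T H)" by auto
qed

lemma sm_Pt: assumes "sm T H" shows "dt_ok T H (Pt T H)" "sm T (Pt T H)"
proof -
  have "\<exists>G. dt_ok T H G \<and> sm T G" using assms by (subst (asm) sm.simps) blast
  hence "dt_ok T H (Pt T H) \<and> sm T (Pt T H)" unfolding Pt_def by (rule someI_ex)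
  thus "dt_ok T H (Pt T H)" "sm T (Pt T H)" by auto
qed

lemma uniq_dx: "dx_ok T H G1 \<Longrightarrow> dx_ok T H G2 \<Longrightarrow> t \<in> Y T \<Longrightarrow> G1 x t = G2 x t"
  unfolding dx_ok_def using DERIV_unique by blast

lemma uniq_dt: "dt_ok T H G1 \<Longrightarrow> dt_ok T H G2 \<Longrightarrow> t \<in> Y T \<Longrightarrow> G1 x t = G2 x t"
  unfolding dt_ok_def using has_field_derivative_unique Y_bot by blast

lemma dx_cong: assumes "dx_ok T A G" "\<And>x t. t \<in> Y T \<Longrightarrow> A x t = B x t"
  "\<And>x t. t \<in> Y T \<Longrightarrow> G x t = G' x t" shows "dx_ok T B G'"
  unfolding dx_ok_def
proof (intro allI impI)
  fix x t assume t: "t \<in> Y T"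
  have "(\<lambda>x. A x t) = (\<lambda>x. B x t)" using assms(2) t by auto
  thus "((\<lambda>x. B x t) has_real_derivative G' x t) (at x)"
    using assms(1) assms(3)[OF t] t unfolding dx_ok_def by metis
qed

lemma dt_cong: assumes "dt_ok T A G" "\<And>x t. t \<in> Y T \<Longrightarrow> A x t = B x t"
  "\<And>x t. t \<in> Y T \<Longrightarrow> G x t = G' x t" shows "dt_ok T B G'"
  unfolding dt_ok_def
proof (intro allI impI)
  fix x t assume t: "t \<in> Y T"
  have "((\<lambda>y. A x y) has_real_derivative G x t) (at t within Y T)" using assms(1) t unfolding dt_ok_def by auto
  hence "((\<lambda>y. B x y) has_real_derivative G x t) (at t within Y T)"
    by (rule has_field_derivative_transform_within[where d=1]) (use t assms(2) in auto)
  thus "((\<lambda>y. B x y) has_real_derivative G' x t) (at t within Y T)" using assms(3)[OF t] by simp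
qed

lemma sm_cong: assumes "sm T A" "\<And>x t. t \<in> Y T \<Longrightarrow> A x t = B x t" shows "sm T B"
proof -
  obtain Hx Ht where *: "continuous_on (strip T) (\<lambda>(x,t). A x t)" "dx_ok T A Hx" "dt_ok T A Ht"
    "sm T Hx" "sm T Ht" using assms(1) by (subst (asm) sm.simps) blast
  have "continuous_on (strip T) (\<lambda>(x,t). B x t)"
    using *(1) by (rule continuous_on_eq) (use assms(2) in auto)
  moreover have "dx_ok T B Hx" by (rule dx_cong[OF *(2) assms(2)]) auto
  moreover have "dt_ok T B Ht" by (rule dt_cong[OF *(3) assms(2)]) auto
  ultimately show ?thesis using *(4,5) by (rule smI)
qed

lemma sm_commute: assumes "sm T H" "t \<in> Y T" shows "Pt T (Px T H) x t = Px T (Pt T H) x t"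
  by (rule schwarz[of T H "Px T H" "Pt T H"])
     (use assms sm_Px sm_Pt sm_cont in auto)

lemma Px_cong: assumes "sm T A" "sm T B" "\<And>x t. t \<in> Y T \<Longrightarrow> A x t = B x t" "t \<in> Y T"
  shows "Px T A x t = Px T B x t"
proof -
  have "dx_ok T B (Px T A)" by (rule dx_cong[OF sm_Px(1)[OF assms(1)] assms(3)]) auto
  thus ?thesis using uniq_dx sm_Px(1)[OF assms(2)] assms(4) by blast
qed

lemma sm_Px_pow: "sm T H \<Longrightarrow> sm T ((Px T ^^ i) H)"
  by (induction i) (auto intro: sm_Px)
lemma sm_Pt_pow: "sm T H \<Longrightarrow> sm T ((Pt T ^^ i) H)"
  by (induction i) (auto intro: sm_Pt)

lemma comm_pow: "sm T H \<Longrightarrow> t \<in> Y T \<Longrightarrow> Pt T ((Px T ^^ i) H) x t = (Px T ^^ i) (Pt T H) x t"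
proof (induction i arbitrary: x t)
  case 0 thus ?case by simp
next
  case (Suc i)
  have "Pt T ((Px T ^^ Suc i) H) x t = Pt T (Px T ((Px T ^^ i) H)) x t" by simp
  also have "\<dots> = Px T (Pt T ((Px T ^^ i) H)) x t"
    by (rule sm_commute) (use Suc sm_Px_pow in auto)
  also have "\<dots> = Px T ((Px T ^^ i) (Pt T H)) x t"
    by (rule Px_cong) (use Suc sm_Px_pow sm_Pt sm_Pt_pow in auto)
  finally show ?case by simp
qed

lemma sm_family: assumes "sm T H"
  shows "smooth_derivs T (\<lambda>i j x t. ((Px T ^^ i) ((Pt T ^^ j) H)) x t)"
  unfolding smooth_derivs_def
proof (intro conjI allI impI)
  fix i j
  show "continuous_on (strip T) (\<lambda>(q, t). ((Px T ^^ i) ((Pt T ^^ j) H)) q t)"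
    using sm_cont sm_Px_pow sm_Pt_pow assms by blast
next
  fix i j q t assume qt: "(q, t) \<in> strip T"
  hence t: "t \<in> Y T" by simp
  have s: "sm T ((Pt T ^^ j) H)" using sm_Pt_pow assms by blast
  show "((\<lambda>x. ((Px T ^^ i) ((Pt T ^^ j) H)) x t) has_real_derivative ((Px T ^^ Suc i) ((Pt T ^^ j) H)) q t) (at q)"
    using sm_Px(1)[OF sm_Px_pow[OF s, of i]] t unfolding dx_ok_def by simp
  have "((\<lambda>y. ((Px T ^^ i) ((Pt T ^^ j) H)) q y) has_real_derivative Pt T ((Px T ^^ i) ((Pt T ^^ j) H)) q t)
      (at t within Y T)"
    using sm_Pt(1)[OF sm_Px_pow[OF s, of i]] t unfolding dt_ok_def by simp
  moreover have "Pt T ((Px T ^^ i) ((Pt T ^^ j) H)) q t = ((Px T ^^ i) ((Pt T ^^ Suc j) H)) q t"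
    using comm_pow[OF s t] by simp
  ultimately show "((\<lambda>y. ((Px T ^^ i) ((Pt T ^^ j) H)) q y) has_real_derivative ((Px T ^^ i) ((Pt T ^^ Suc j) H)) q t)
      (at t within {y. 0 \<le> y \<and> ereal y < T})" by simp
qed


lemma sm_coinduct_simple:
  assumes "X H"
    and "\<And>H. X H \<Longrightarrow> continuous_on (strip T) (\<lambda>(x,t). H x t) \<and>
            (\<exists>Hx Ht. dx_ok T H Hx \<and> dt_ok T H Ht \<and> (X Hx \<or> sm T Hx) \<and> (X Ht \<or> sm T Ht))"
  shows "sm T H"
  using assms(1)
proof (coinduction arbitrary: H rule: sm.coinduct)
  case (sm H)
  thus ?case using assms(2) by blast
qed

lemma sm_const: "sm T (\<lambda>x t. c)"
proof -
  have "\<exists>c. H = (\<lambda>x t. c) \<Longrightarrow> sm T H" for H :: "real \<Rightarrow> real \<Rightarrow> real"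
  proof (rule sm_coinduct_simple[where X="\<lambda>H. \<exists>c. H = (\<lambda>x t. c)"])
    fix H :: "real \<Rightarrow> real \<Rightarrow> real" assume "\<exists>c. H = (\<lambda>x t. c)"
    then obtain c where c: "H = (\<lambda>x t. c)" by blast
    have "dx_ok T H (\<lambda>x t. 0)" unfolding dx_ok_def c by auto
    moreover have "dt_ok T H (\<lambda>x t. 0)" unfolding dt_ok_def c by auto
    ultimately show "continuous_on (strip T) (\<lambda>(x,t). H x t) \<and>
            (\<exists>Hx Ht. dx_ok T H Hx \<and> dt_ok T H Ht \<and> ((\<exists>c. Hx = (\<lambda>x t. c)) \<or> sm T Hx)
              \<and> ((\<exists>c. Ht = (\<lambda>x t. c)) \<or> sm T Ht))"
      unfolding c by (auto intro: continuous_on_const)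
  qed
  thus ?thesis by blast
qed

lemma sm_x: "sm T (\<lambda>x t. x)"
proof (rule smI[where Hx="\<lambda>x t. 1" and Ht="\<lambda>x t. 0"])
  show "continuous_on (strip T) (\<lambda>(x, t). x)" by (auto intro!: continuous_intros simp: split_beta)
  show "dx_ok T (\<lambda>x t. x) (\<lambda>x t. 1)" unfolding dx_ok_def by auto
  show "dt_ok T (\<lambda>x t. x) (\<lambda>x t. 0)" unfolding dt_ok_def by auto
qed (auto intro: sm_const)

lemma sm_t: "sm T (\<lambda>x t. t)"
proof (rule smI[where Hx="\<lambda>x t. 0" and Ht="\<lambda>x t. 1"])
  show "continuous_on (strip T) (\<lambda>(x, t). t)" by (auto intro!: continuous_intros simp: split_beta)
  show "dx_ok T (\<lambda>x t. t) (\<lambda>x t. 0)" unfolding dx_ok_def by auto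
  show "dt_ok T (\<lambda>x t. t) (\<lambda>x t. 1)" unfolding dt_ok_def by (auto intro!: derivative_eq_intros)
qed (auto intro: sm_const)

coinductive sm1 :: "real set \<Rightarrow> (real \<Rightarrow> real) \<Rightarrow> bool" for U where
  sm1I: "(\<And>x. x \<in> U \<Longrightarrow> (\<phi> has_real_derivative \<phi>' x) (at x)) \<Longrightarrow> sm1 U \<phi>' \<Longrightarrow> sm1 U \<phi>"

definition P1d :: "real set \<Rightarrow> (real \<Rightarrow> real) \<Rightarrow> (real \<Rightarrow> real)" where
  "P1d U \<phi> = (SOME \<phi>'. (\<forall>x\<in>U. (\<phi> has_real_derivative \<phi>' x) (at x)) \<and> sm1 U \<phi>')"

lemma sm1_P1d: assumes "sm1 U \<phi>"
  shows "\<And>x. x \<in> U \<Longrightarrow> (\<phi> has_real_derivative P1d U \<phi> x) (at x)" "sm1 U (P1d U \<phi>)"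
proof -
  have "\<exists>\<phi>'. (\<forall>x\<in>U. (\<phi> has_real_derivative \<phi>' x) (at x)) \<and> sm1 U \<phi>'"
    using assms by (subst (asm) sm1.simps) blast
  hence "(\<forall>x\<in>U. (\<phi> has_real_derivative P1d U \<phi> x) (at x)) \<and> sm1 U (P1d U \<phi>)"
    unfolding P1d_def by (rule someI_ex)
  thus "\<And>x. x \<in> U \<Longrightarrow> (\<phi> has_real_derivative P1d U \<phi> x) (at x)" "sm1 U (P1d U \<phi>)" by auto
qed

lemma mvt_any:
  assumes "\<And>y. ((f::real\<Rightarrow>real) has_real_derivative f' y) (at y)"
  shows "\<exists>z. \<bar>z - a\<bar> \<le> \<bar>b - a\<bar> \<and> f b - f a = (b - a) * f' z"
proof (cases a b rule: linorder_cases)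
  case less
  from MVT2[OF less, of f f'] assms obtain z where "a < z" "z < b" "f b - f a = (b - a) * f' z" by blast
  thus ?thesis by (intro exI[of _ z]) auto
next
  case equal thus ?thesis by auto
next
  case greater
  from MVT2[OF greater, of f f'] assms obtain z where "b < z" "z < a" "f a - f b = (a - b) * f' z" by blast
  thus ?thesis by (intro exI[of _ z]) (auto simp: algebra_simps)
qed

lemma L_cont:
  assumes hx: "dx_ok T H Hx" and ht: "dt_ok T H Ht"
    and c: "continuous_on (strip T) (\<lambda>(x,t). Hx x t)"
  shows "continuous_on (strip T) (\<lambda>(x,t). H x t)"
  unfolding continuous_on_iff
proof (intro ballI allI impI)
  fix p e assume p: "p \<in> strip T" and e: "(0::real) < e"
  obtain x0 t0 where p0: "p = (x0,t0)" by (cases p)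
  have t0: "t0 \<in> Y T" using p p0 by simp
  obtain d1 where d1: "d1 > 0" "\<And>q. q \<in> strip T \<Longrightarrow> dist q (x0,t0) < d1 \<Longrightarrow>
      dist ((\<lambda>(x,t). Hx x t) q) (Hx x0 t0) < 1"
    using c p p0 unfolding continuous_on_iff
    by (metis (no_types, lifting) case_prod_conv zero_less_one)
  define B where "B = \<bar>Hx x0 t0\<bar> + 1"
  have B: "B > 0" by (simp add: B_def add_pos_nonneg)
  have "continuous (at t0 within Y T) (\<lambda>y. H x0 y)"
    using ht t0 unfolding dt_ok_def by (blast intro: DERIV_continuous)
  then obtain d2 where d2: "d2 > 0" "\<And>y. y \<in> Y T \<Longrightarrow> dist y t0 < d2 \<Longrightarrow> dist (H x0 y) (H x0 t0) < e/2"
    unfolding continuous_within_eps_delta using e by (metis half_gt_zero)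
  define d where "d = min (min (d1/2) d2) (e / (2*B))"
  have d: "d > 0" using d1 d2 e B by (simp add: d_def)
  show "\<exists>d>0. \<forall>q\<in>strip T. dist q p < d \<longrightarrow> dist ((\<lambda>(x,t). H x t) q) ((\<lambda>(x,t). H x t) p) < e"
  proof (intro exI[of _ d] conjI ballI impI d)
    fix q assume q: "q \<in> strip T" "dist q p < d"
    obtain x t where qq: "q = (x,t)" by (cases q)
    have t: "t \<in> Y T" using q qq by simp
    have dx: "\<bar>x - x0\<bar> < d" using dist_fst_le[of q p] q(2) qq p0 by (simp add: dist_real_def)
    have dt: "\<bar>t - t0\<bar> < d" using dist_snd_le[of q p] q(2) qq p0 by (simp add: dist_real_def)
    obtain z where z: "\<bar>z - x0\<bar> \<le> \<bar>x - x0\<bar>" "H x t - H x0 t = (x - x0) * Hx z t"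
      using mvt_any[of "\<lambda>x. H x t" "\<lambda>z. Hx z t" x0 x] hx t unfolding dx_ok_def by blast
    have "dist (z,t) (x0,t0) \<le> \<bar>z - x0\<bar> + \<bar>t - t0\<bar>" by (rule dist_pair_le)
    also have "\<dots> < d1" using z dx dt unfolding d_def by linarith
    finally have "\<bar>Hx z t - Hx x0 t0\<bar> < 1" using d1(2)[of "(z,t)"] t by (simp add: dist_real_def)
    hence hz: "\<bar>Hx z t\<bar> \<le> B" unfolding B_def by linarith
    have "\<bar>H x t - H x0 t\<bar> = \<bar>x - x0\<bar> * \<bar>Hx z t\<bar>" using z(2) by (simp add: abs_mult)
    also have "\<dots> \<le> \<bar>x - x0\<bar> * B" using hz by (simp add: mult_left_mono)
    also have "\<dots> \<le> d * B" using dx B by (simp add: mult_right_mono)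
    also have "\<dots> \<le> (e / (2*B)) * B" using B unfolding d_def by (intro mult_right_mono) auto
    also have "\<dots> = e/2" using B by simp
    finally have a1: "\<bar>H x t - H x0 t\<bar> \<le> e/2" .
    have "\<bar>H x0 t - H x0 t0\<bar> < e/2" using d2(2)[OF t] dt unfolding d_def by (simp add: dist_real_def)
    hence "\<bar>H x t - H x0 t0\<bar> < e" using a1 by linarith
    thus "dist ((\<lambda>(x,t). H x t) q) ((\<lambda>(x,t). H x t) p) < e" using qq p0 by (simp add: dist_real_def)
  qed
qed


inductive cl :: "ereal \<Rightarrow> (real \<Rightarrow> real \<Rightarrow> real) \<Rightarrow> bool" for T where
  cl_sm: "sm T H \<Longrightarrow> cl T H"
| cl_add: "cl T F \<Longrightarrow> cl T G \<Longrightarrow> cl T (\<lambda>x t. F x t + G x t)"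
| cl_mul: "cl T F \<Longrightarrow> cl T G \<Longrightarrow> cl T (\<lambda>x t. F x t * G x t)"
| cl_comp: "open U \<Longrightarrow> sm1 U \<phi> \<Longrightarrow> sm T H \<Longrightarrow> (\<And>x t. t \<in> Y T \<Longrightarrow> H x t \<in> U) \<Longrightarrow>
     cl T (\<lambda>x t. \<phi> (H x t))"
| cl_int: "sm T h \<Longrightarrow> (\<And>x t. t \<in> Y T \<Longrightarrow> K \<le> x \<Longrightarrow> h x t = 0) \<Longrightarrow>
     cl T (\<lambda>x t. integral {x..K} (\<lambda>y. h y t))"

lemma convex_Y: "convex (Y T)"
proof (rule is_interval_convex)
  show "is_interval (Y T)" unfolding is_interval_1
    using Y_sub by blast
qed

lemma cont_slice: assumes "continuous_on (strip T) (\<lambda>(x,t). H x t)" "t \<in> Y T"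
  shows "continuous_on UNIV (\<lambda>x. H x t)"
proof -
  have "continuous_on UNIV (\<lambda>x. (\<lambda>(x,t). H x t) (x, t))"
    by (rule continuous_on_compose2[OF assms(1)]) (use assms(2) in \<open>auto intro!: continuous_intros\<close>)
  thus ?thesis by simp
qed

lemma int_dx:
  assumes c: "continuous_on UNIV g" and z: "\<And>y. K \<le> y \<Longrightarrow> g y = 0"
  shows "((\<lambda>x. integral {x..K} g) has_real_derivative - g x0) (at x0)"
proof -
  define B where "B = max K (x0 + 1)"
  have eq: "integral {x..K} g = integral {x..B} g" for x
  proof (cases "x \<le> K")
    case True
    have "integral {x..K} g + integral {K..B} g = integral {x..B} g"
      by (rule Henstock_Kurzweil_Integration.integral_combine) (use True in \<open>auto simp: B_def intro!: integrable_continuous_real continuous_on_subset[OF c]\<close>)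
    moreover have "integral {K..B} g = integral {K..B} (\<lambda>_. 0)" by (rule integral_cong) (use z in auto)
    ultimately show ?thesis by simp
  next
    case False
    have "integral {x..B} g = integral {x..B} (\<lambda>_. 0)" by (rule integral_cong) (use z False in auto)
    thus ?thesis using False by simp
  qed
  have "((\<lambda>x. integral {x..B} g) has_real_derivative - g x0) (at x0 within {x0 - 1..B})"
    by (rule integral_has_real_derivative') (auto simp: B_def intro: continuous_on_subset[OF c])
  hence "((\<lambda>x. integral {x..B} g) has_real_derivative - g x0) (at x0)"
    using at_within_Icc_at[of "x0 - 1" x0 B] by (simp add: B_def)
  thus ?thesis unfolding eq .
qed

lemma int_dt:
  assumes ht: "dt_ok T h Ht" and c: "continuous_on (strip T) (\<lambda>(x,t). Ht x t)"
    and ch: "continuous_on (strip T) (\<lambda>(x,t). h x t)"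
  shows "dt_ok T (\<lambda>x t. integral {x..K} (\<lambda>y. h y t)) (\<lambda>x t. integral {x..K} (\<lambda>y. Ht y t))"
  unfolding dt_ok_def
proof (intro allI impI)
  fix x t assume t: "t \<in> Y T"
  have "((\<lambda>\<tau>. integral (cbox x K) (\<lambda>y. h y \<tau>)) has_real_derivative integral (cbox x K) (\<lambda>y. Ht y t))
      (at t within Y T)"
  proof (rule leibniz_rule_field_derivative[where fx="\<lambda>\<tau> y. Ht y \<tau>"])
    show "\<And>\<tau> y. \<tau> \<in> Y T \<Longrightarrow> y \<in> cbox x K \<Longrightarrow> ((\<lambda>\<tau>. h y \<tau>) has_real_derivative Ht y \<tau>) (at \<tau> within Y T)"
      using ht unfolding dt_ok_def by blast
    show "\<And>\<tau>. \<tau> \<in> Y T \<Longrightarrow> (\<lambda>y. h y \<tau>) integrable_on cbox x K"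
      by (rule integrable_continuous, rule continuous_on_subset[OF cont_slice[OF ch]]) auto
    show "continuous_on (Y T \<times> cbox x K) (\<lambda>(\<tau>, y). Ht y \<tau>)"
    proof -
      have "continuous_on (Y T \<times> cbox x K) (\<lambda>p. (\<lambda>(x,t). Ht x t) (snd p, fst p))"
        by (rule continuous_on_compose2[OF c]) (auto intro!: continuous_intros)
      thus ?thesis by (simp add: split_beta)
    qed
  qed (use t convex_Y in auto)
  thus "((\<lambda>y. integral {x..K} (\<lambda>ya. h ya y)) has_real_derivative integral {x..K} (\<lambda>y. Ht y t)) (at t within Y T)"
    by simp
qed

lemma dt_zero: assumes "dt_ok T h Ht" "t \<in> Y T" "\<And>\<tau>. \<tau> \<in> Y T \<Longrightarrow> h y \<tau> = 0" shows "Ht y t = 0"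
proof -
  have "((\<lambda>\<tau>. h y \<tau>) has_real_derivative Ht y t) (at t within Y T)" using assms unfolding dt_ok_def by blast
  hence "((\<lambda>\<tau>. 0) has_real_derivative Ht y t) (at t within Y T)"
    by (rule has_field_derivative_transform_within[where d=1]) (use assms in auto)
  moreover have "((\<lambda>\<tau>. 0) has_real_derivative 0) (at t within Y T)" by simp
  ultimately show ?thesis using has_field_derivative_unique Y_bot assms(2) by blast
qed

lemma cl_props: "cl T H \<Longrightarrow> continuous_on (strip T) (\<lambda>(x,t). H x t) \<and>
   (\<exists>Hx Ht. dx_ok T H Hx \<and> dt_ok T H Ht \<and> cl T Hx \<and> cl T Ht)"
proof (induction rule: cl.induct)
  case (cl_sm H)
  then obtain Hx Ht where *: "continuous_on (strip T) (\<lambda>(x,t). H x t)" "dx_ok T H Hx" "dt_ok T H Ht"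
    "sm T Hx" "sm T Ht" by (subst (asm) sm.simps) blast
  thus ?case by (blast intro: cl.cl_sm)
next
  case (cl_add F G)
  then obtain Fx Ft Gx Gt where F: "dx_ok T F Fx" "dt_ok T F Ft" "cl T Fx" "cl T Ft"
    and G: "dx_ok T G Gx" "dt_ok T G Gt" "cl T Gx" "cl T Gt" by blast
  have "continuous_on (strip T) (\<lambda>(x,t). F x t + G x t)"
    using cl_add.IH continuous_on_add[of "strip T" "\<lambda>(x,t). F x t" "\<lambda>(x,t). G x t"]
    by (simp add: split_beta)
  moreover have "dx_ok T (\<lambda>x t. F x t + G x t) (\<lambda>x t. Fx x t + Gx x t)"
    using F G unfolding dx_ok_def by (auto intro: DERIV_add)
  moreover have "dt_ok T (\<lambda>x t. F x t + G x t) (\<lambda>x t. Ft x t + Gt x t)"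
    using F G unfolding dt_ok_def by (auto intro: DERIV_add)
  ultimately show ?case using F G by (blast intro: cl.cl_add)
next
  case (cl_mul F G)
  then obtain Fx Ft Gx Gt where F: "dx_ok T F Fx" "dt_ok T F Ft" "cl T Fx" "cl T Ft"
    and G: "dx_ok T G Gx" "dt_ok T G Gt" "cl T Gx" "cl T Gt" by blast
  have "continuous_on (strip T) (\<lambda>(x,t). F x t * G x t)"
    using cl_mul.IH continuous_on_mult[of "strip T" "\<lambda>(x,t). F x t" "\<lambda>(x,t). G x t"]
    by (simp add: split_beta)
  moreover have "dx_ok T (\<lambda>x t. F x t * G x t) (\<lambda>x t. Fx x t * G x t + F x t * Gx x t)"
    using F G unfolding dx_ok_def by (auto intro!: derivative_eq_intros)
  moreover have "dt_ok T (\<lambda>x t. F x t * G x t) (\<lambda>x t. Ft x t * G x t + F x t * Gt x t)"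
    using F G unfolding dt_ok_def by (auto intro!: derivative_eq_intros)
  moreover have "cl T (\<lambda>x t. Fx x t * G x t + F x t * Gx x t)"
    by (rule cl.cl_add[OF cl.cl_mul[OF F(3) cl_mul.hyps(2)] cl.cl_mul[OF cl_mul.hyps(1) G(3)]])
  moreover have "cl T (\<lambda>x t. Ft x t * G x t + F x t * Gt x t)"
    by (rule cl.cl_add[OF cl.cl_mul[OF F(4) cl_mul.hyps(2)] cl.cl_mul[OF cl_mul.hyps(1) G(4)]])
  ultimately show ?case by blast
next
  case (cl_comp U \<phi> H)
  obtain Hx Ht where H: "continuous_on (strip T) (\<lambda>(x,t). H x t)" "dx_ok T H Hx" "dt_ok T H Ht"
    "sm T Hx" "sm T Ht" using cl_comp.hyps(3) by (subst (asm) sm.simps) blast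
  note d = sm1_P1d[OF cl_comp.hyps(2)]
  have cphi: "continuous_on U \<phi>"
    using d(1) by (intro continuous_at_imp_continuous_on) (blast intro: DERIV_isCont)
  have "continuous_on (strip T) (\<lambda>p. \<phi> ((\<lambda>(x,t). H x t) p))"
    by (rule continuous_on_compose2[OF cphi H(1)]) (use cl_comp.hyps(4) in auto)
  hence "continuous_on (strip T) (\<lambda>(x,t). \<phi> (H x t))" by (simp add: split_beta)
  moreover have "dx_ok T (\<lambda>x t. \<phi> (H x t)) (\<lambda>x t. P1d U \<phi> (H x t) * Hx x t)"
    unfolding dx_ok_def
  proof (intro allI impI)
    fix x t assume t: "t \<in> Y T"
    show "((\<lambda>x. \<phi> (H x t)) has_real_derivative P1d U \<phi> (H x t) * Hx x t) (at x)"
      by (rule DERIV_chain2[OF d(1)]) (use t cl_comp.hyps(4) H(2) in \<open>auto simp: dx_ok_def\<close>)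
  qed
  moreover have "dt_ok T (\<lambda>x t. \<phi> (H x t)) (\<lambda>x t. P1d U \<phi> (H x t) * Ht x t)"
    unfolding dt_ok_def
  proof (intro allI impI)
    fix x t assume t: "t \<in> Y T"
    show "((\<lambda>y. \<phi> (H x y)) has_real_derivative P1d U \<phi> (H x t) * Ht x t) (at t within Y T)"
      by (rule DERIV_chain2[OF d(1)]) (use t cl_comp.hyps(4) H(3) in \<open>auto simp: dt_ok_def\<close>)
  qed
  moreover have "cl T (\<lambda>x t. P1d U \<phi> (H x t))"
    by (rule cl.cl_comp[OF cl_comp.hyps(1) d(2) cl_comp.hyps(3) cl_comp.hyps(4)])
  moreover note cl.cl_mul[OF calculation(4) cl.cl_sm[OF H(4)]] cl.cl_mul[OF calculation(4) cl.cl_sm[OF H(5)]]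
  ultimately show ?case by blast
next
  case (cl_int h K)
  obtain hx ht where H: "continuous_on (strip T) (\<lambda>(x,t). h x t)" "dx_ok T h hx" "dt_ok T h ht"
    "sm T hx" "sm T ht" using cl_int.hyps(1) by (subst (asm) sm.simps) blast
  have dx: "dx_ok T (\<lambda>x t. integral {x..K} (\<lambda>y. h y t)) (\<lambda>x t. (-1) * h x t)"
    unfolding dx_ok_def
  proof (intro allI impI)
    fix x t assume t: "t \<in> Y T"
    show "((\<lambda>x. integral {x..K} (\<lambda>y. h y t)) has_real_derivative (-1) * h x t) (at x)"
      using int_dx[OF cont_slice[OF H(1) t], of K x] cl_int.hyps(2)[OF t] by simp
  qed
  have dt: "dt_ok T (\<lambda>x t. integral {x..K} (\<lambda>y. h y t)) (\<lambda>x t. integral {x..K} (\<lambda>y. ht y t))"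
    by (rule int_dt[OF H(3) sm_cont[OF H(5)] H(1)])
  have "continuous_on (strip T) (\<lambda>(x,t). integral {x..K} (\<lambda>y. h y t))"
  proof (rule L_cont[OF dx dt])
    show "continuous_on (strip T) (\<lambda>(x, t). (-1) * h x t)"
      using continuous_on_mult[OF continuous_on_const H(1), of "-1"] by (simp add: split_beta)
  qed
  moreover have "cl T (\<lambda>x t. (-1) * h x t)"
    by (rule cl.cl_mul[OF cl.cl_sm[OF sm_const] cl.cl_sm[OF cl_int.hyps(1)]])
  moreover have "cl T (\<lambda>x t. integral {x..K} (\<lambda>y. ht y t))"
  proof (rule cl.cl_int[OF H(5)])
    fix x t assume "t \<in> Y T" "K \<le> x"
    thus "ht x t = 0" using dt_zero[OF H(3)] cl_int.hyps(2) by blast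
  qed
  ultimately show ?case using dx dt by blast
qed

lemma cl_imp_sm: assumes "cl T H" shows "sm T H"
  using assms
proof (rule sm_coinduct_simple[where X="cl T"])
  fix H assume "cl T H"
  from cl_props[OF this] show "continuous_on (strip T) (\<lambda>(x,t). H x t) \<and>
            (\<exists>Hx Ht. dx_ok T H Hx \<and> dt_ok T H Ht \<and> (cl T Hx \<or> sm T Hx) \<and> (cl T Ht \<or> sm T Ht))"
    by blast
qed


lemma mvt_tendsto:
  assumes hx: "dx_ok T H Hs" and c: "continuous_on (strip T) (\<lambda>(x,t). Hs x t)"
    and t0: "t0 \<in> Y T" and a: "(\<alpha> \<longlongrightarrow> \<alpha> t0) (at t0 within Y T)"
  obtains \<xi> where "\<And>t. t \<in> Y T \<Longrightarrow> H (\<alpha> t) t - H (\<alpha> t0) t = (\<alpha> t - \<alpha> t0) * Hs (\<xi> t) t"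
    "((\<lambda>t. Hs (\<xi> t) t) \<longlongrightarrow> Hs (\<alpha> t0) t0) (at t0 within Y T)"
proof -
  have "\<forall>t. \<exists>z. t \<in> Y T \<longrightarrow> \<bar>z - \<alpha> t0\<bar> \<le> \<bar>\<alpha> t - \<alpha> t0\<bar> \<and> H (\<alpha> t) t - H (\<alpha> t0) t = (\<alpha> t - \<alpha> t0) * Hs z t"
  proof
    fix t show "\<exists>z. t \<in> Y T \<longrightarrow> \<bar>z - \<alpha> t0\<bar> \<le> \<bar>\<alpha> t - \<alpha> t0\<bar> \<and> H (\<alpha> t) t - H (\<alpha> t0) t = (\<alpha> t - \<alpha> t0) * Hs z t"
    proof (cases "t \<in> Y T")
      case True
      thus ?thesis using mvt_any[of "\<lambda>x. H x t" "\<lambda>z. Hs z t" "\<alpha> t0" "\<alpha> t"] hx unfolding dx_ok_def by blast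
    qed auto
  qed
  then obtain \<xi> where \<xi>: "\<And>t. t \<in> Y T \<Longrightarrow> \<bar>\<xi> t - \<alpha> t0\<bar> \<le> \<bar>\<alpha> t - \<alpha> t0\<bar> \<and> H (\<alpha> t) t - H (\<alpha> t0) t = (\<alpha> t - \<alpha> t0) * Hs (\<xi> t) t"
    by metis
  have ev: "eventually (\<lambda>t. t \<in> Y T) (at t0 within Y T)" by (simp add: eventually_at_filter)
  have "((\<lambda>t. \<alpha> t - \<alpha> t0) \<longlongrightarrow> 0) (at t0 within Y T)" using a by (simp add: LIM_zero)
  hence "((\<lambda>t. \<bar>\<alpha> t - \<alpha> t0\<bar>) \<longlongrightarrow> 0) (at t0 within Y T)" using tendsto_rabs_zero by blast
  hence "((\<lambda>t. \<xi> t - \<alpha> t0) \<longlongrightarrow> 0) (at t0 within Y T)"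
    by (rule Lim_null_comparison[rotated]) (use ev \<xi> in \<open>auto elim: eventually_mono\<close>)
  hence x1: "(\<xi> \<longlongrightarrow> \<alpha> t0) (at t0 within Y T)" by (simp add: LIM_zero_iff)
  have "((\<lambda>t. (\<xi> t, t)) \<longlongrightarrow> (\<alpha> t0, t0)) (at t0 within Y T)"
    by (intro tendsto_Pair x1 tendsto_ident_at)
  hence "((\<lambda>t. (\<lambda>(x,t). Hs x t) (\<xi> t, t)) \<longlongrightarrow> (\<lambda>(x,t). Hs x t) (\<alpha> t0, t0)) (at t0 within Y T)"
    by (rule continuous_on_tendsto_compose[OF c]) (use t0 ev in \<open>auto elim: eventually_mono\<close>)
  hence "((\<lambda>t. Hs (\<xi> t) t) \<longlongrightarrow> Hs (\<alpha> t0) t0) (at t0 within Y T)" by simp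
  thus ?thesis using that \<xi> by blast
qed

lemma chain_t:
  assumes hx: "dx_ok T H Hs" and ht: "dt_ok T H Ht" and c: "continuous_on (strip T) (\<lambda>(x,t). Hs x t)"
    and t0: "t0 \<in> Y T" and a: "(\<alpha> has_real_derivative a') (at t0 within Y T)"
  shows "((\<lambda>t. H (\<alpha> t) t) has_real_derivative Hs (\<alpha> t0) t0 * a' + Ht (\<alpha> t0) t0) (at t0 within Y T)"
proof -
  have ac: "(\<alpha> \<longlongrightarrow> \<alpha> t0) (at t0 within Y T)"
    using DERIV_continuous[OF a] by (simp add: continuous_within)
  obtain \<xi> where \<xi>: "\<And>t. t \<in> Y T \<Longrightarrow> H (\<alpha> t) t - H (\<alpha> t0) t = (\<alpha> t - \<alpha> t0) * Hs (\<xi> t) t"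
    "((\<lambda>t. Hs (\<xi> t) t) \<longlongrightarrow> Hs (\<alpha> t0) t0) (at t0 within Y T)"
    using mvt_tendsto[OF hx c t0 ac] by blast
  have q1: "((\<lambda>t. (\<alpha> t - \<alpha> t0) / (t - t0)) \<longlongrightarrow> a') (at t0 within Y T)"
    using a by (simp add: has_field_derivative_iff)
  have q2: "((\<lambda>t. (H (\<alpha> t0) t - H (\<alpha> t0) t0) / (t - t0)) \<longlongrightarrow> Ht (\<alpha> t0) t0) (at t0 within Y T)"
    using ht t0 unfolding dt_ok_def has_field_derivative_iff by blast
  have lim: "((\<lambda>t. Hs (\<xi> t) t * ((\<alpha> t - \<alpha> t0) / (t - t0)) + (H (\<alpha> t0) t - H (\<alpha> t0) t0) / (t - t0))
      \<longlongrightarrow> Hs (\<alpha> t0) t0 * a' + Ht (\<alpha> t0) t0) (at t0 within Y T)"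
    by (intro tendsto_add tendsto_mult \<xi>(2) q1 q2)
  have "eventually (\<lambda>t. Hs (\<xi> t) t * ((\<alpha> t - \<alpha> t0) / (t - t0)) + (H (\<alpha> t0) t - H (\<alpha> t0) t0) / (t - t0)
      = (H (\<alpha> t) t - H (\<alpha> t0) t0) / (t - t0)) (at t0 within Y T)"
    unfolding eventually_at_filter
  proof (intro always_eventually allI impI)
    fix t assume "t \<noteq> t0" "t \<in> Y T"
    have e: "(\<alpha> t - \<alpha> t0) * Hs (\<xi> t) t = H (\<alpha> t) t - H (\<alpha> t0) t" using \<xi>(1)[OF \<open>t \<in> Y T\<close>] by simp
    have "Hs (\<xi> t) t * ((\<alpha> t - \<alpha> t0) / (t - t0)) + (H (\<alpha> t0) t - H (\<alpha> t0) t0) / (t - t0)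
      = ((\<alpha> t - \<alpha> t0) * Hs (\<xi> t) t + (H (\<alpha> t0) t - H (\<alpha> t0) t0)) / (t - t0)"
      by (simp add: add_divide_distrib mult.commute)
    also have "\<dots> = (H (\<alpha> t) t - H (\<alpha> t0) t0) / (t - t0)" unfolding e by simp
    finally show "Hs (\<xi> t) t * ((\<alpha> t - \<alpha> t0) / (t - t0)) + (H (\<alpha> t0) t - H (\<alpha> t0) t0) / (t - t0)
      = (H (\<alpha> t) t - H (\<alpha> t0) t0) / (t - t0)" .
  qed
  from tendsto_cong[OF this] lim
  show ?thesis unfolding has_field_derivative_iff by simp
qed


lemma sm1_coinduct_simple:
  assumes "X \<phi>"
    and "\<And>\<phi>. X \<phi> \<Longrightarrow> \<exists>\<phi>'. (\<forall>x\<in>U. (\<phi> has_real_derivative \<phi>' x) (at x)) \<and> (X \<phi>' \<or> sm1 U \<phi>')"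
  shows "sm1 U \<phi>"
  using assms(1)
proof (coinduction arbitrary: \<phi> rule: sm1.coinduct)
  case (sm1 \<phi>)
  thus ?case using assms(2) by blast
qed

lemma sm1_inverse: "sm1 {0<..} inverse"
proof -
  have "\<exists>c n. \<phi> = (\<lambda>x. c * inverse x ^ n) \<Longrightarrow> sm1 {0<..} \<phi>" for \<phi> :: "real \<Rightarrow> real"
  proof (rule sm1_coinduct_simple[where X="\<lambda>\<phi>. \<exists>c n. \<phi> = (\<lambda>x. c * inverse x ^ n)"])
    fix \<phi> :: "real \<Rightarrow> real" assume "\<exists>c n. \<phi> = (\<lambda>x. c * inverse x ^ n)"
    then obtain c n where c: "\<phi> = (\<lambda>x. c * inverse x ^ n)" by blast
    have "\<forall>x\<in>{0<..}. (\<phi> has_real_derivative (- c * real n) * inverse x ^ Suc n) (at x)"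
    proof
      fix x :: real assume "x \<in> {0<..}"
      hence x: "x \<noteq> 0" by simp
      have d: "((\<lambda>x. c * inverse x ^ n) has_real_derivative
          c * (real n * inverse x ^ (n - 1) * (- (inverse x * inverse x)))) (at x)"
        using x by (auto intro!: derivative_eq_intros)
      have eq: "c * (real n * inverse x ^ (n - 1) * (- (inverse x * inverse x))) = (- c * real n) * inverse x ^ Suc n"
        by (cases n) (simp_all add: power_Suc)
      show "(\<phi> has_real_derivative (- c * real n) * inverse x ^ Suc n) (at x)"
        unfolding c using d[unfolded eq] .
    qed
    thus "\<exists>\<phi>'. (\<forall>x\<in>{0<..}. (\<phi> has_real_derivative \<phi>' x) (at x)) \<and>
        ((\<exists>c n. \<phi>' = (\<lambda>x. c * inverse x ^ n)) \<or> sm1 {0<..} \<phi>')"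
      by (intro exI[of _ "\<lambda>x. (- c * real n) * inverse x ^ Suc n"]) blast
  qed
  moreover have "inverse = (\<lambda>x::real. 1 * inverse x ^ 1)" by auto
  ultimately show ?thesis by metis
qed


locale lag =
  fixes T :: ereal and q J qt :: "real \<Rightarrow> real \<Rightarrow> real"
  assumes q_sm: "sm T q" and qJ: "dx_ok T q J" and qqt: "dt_ok T q qt"
    and J_sm: "sm T J" and qt_sm: "sm T qt"
    and J_pos: "\<And>s t. t \<in> Y T \<Longrightarrow> J s t > 0"
    and q_surj: "\<And>x t. t \<in> Y T \<Longrightarrow> \<exists>s. q s t = x"
begin

definition sig :: "real \<Rightarrow> real \<Rightarrow> real" where "sig x t = (THE s. q s t = x)"

lemma q_mono: assumes "t \<in> Y T" "a < b" shows "q a t < q b t"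
proof -
  obtain z where "a < z" "z < b" "q b t - q a t = (b - a) * J z t"
    using MVT2[OF assms(2), of "\<lambda>s. q s t" "\<lambda>s. J s t"] qJ assms(1) unfolding dx_ok_def by blast
  moreover have "J z t > 0" using J_pos assms(1) by blast
  moreover have "(b - a) * J z t > 0" using \<open>J z t > 0\<close> assms(2) by simp
  ultimately show ?thesis by linarith
qed

lemma q_mono_iff: assumes "t \<in> Y T" shows "q a t < q b t \<longleftrightarrow> a < b"
  using q_mono[OF assms] by (metis linorder_neqE_linordered_idom order_less_asym)

lemma q_inj: assumes "t \<in> Y T" "q a t = q b t" shows "a = b"
  using q_mono[OF assms(1)] assms(2) by (metis linorder_neqE_linordered_idom order_less_irrefl)

lemma sig_q: assumes "t \<in> Y T" shows "q (sig x t) t = x"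
proof -
  have "\<exists>!s. q s t = x" using q_surj[OF assms] q_inj[OF assms] by blast
  thus ?thesis unfolding sig_def by (rule theI')
qed

lemma sig_eq: assumes "t \<in> Y T" "q s t = x" shows "sig x t = s"
  using sig_q[OF assms(1)] assms q_inj by metis

lemma q_cont: "continuous_on (strip T) (\<lambda>(x,t). q x t)" using sm_cont[OF q_sm] .
lemma J_cont: "continuous_on (strip T) (\<lambda>(x,t). J x t)" using sm_cont[OF J_sm] .

lemma sig_cont: "continuous_on (strip T) (\<lambda>(x,t). sig x t)"
  unfolding continuous_on_iff
proof (intro ballI allI impI)
  fix p e assume p: "p \<in> strip T" and e: "(0::real) < e"
  obtain x0 t0 where p0: "p = (x0,t0)" by (cases p)
  have t0: "t0 \<in> Y T" using p p0 by simp
  define s0 where "s0 = sig x0 t0"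
  have lo: "q (s0 - e) t0 < x0" using q_mono[OF t0, of "s0 - e" s0] sig_q[OF t0] e s0_def by simp
  have hi: "x0 < q (s0 + e) t0" using q_mono[OF t0, of s0 "s0 + e"] sig_q[OF t0] e s0_def by simp
  define \<eta> where "\<eta> = min (x0 - q (s0 - e) t0) (q (s0 + e) t0 - x0) / 4"
  have \<eta>: "\<eta> > 0" using lo hi by (simp add: \<eta>_def)
  have \<eta>1: "q (s0 - e) t0 + \<eta> < x0 - \<eta>" "x0 + \<eta> < q (s0 + e) t0 - \<eta>"
  proof -
    define m where "m = min (x0 - q (s0 - e) t0) (q (s0 + e) t0 - x0)"
    have m: "m \<le> x0 - q (s0 - e) t0" "m \<le> q (s0 + e) t0 - x0" "\<eta> = m / 4" unfolding m_def \<eta>_def by auto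
    show "q (s0 - e) t0 + \<eta> < x0 - \<eta>" using m \<eta> by linarith
    show "x0 + \<eta> < q (s0 + e) t0 - \<eta>" using m \<eta> by linarith
  qed
  obtain d1 where d1: "d1 > 0" "\<And>r. r \<in> strip T \<Longrightarrow> dist r (s0 - e, t0) < d1 \<Longrightarrow>
      dist ((\<lambda>(x,t). q x t) r) (q (s0 - e) t0) < \<eta>"
    using q_cont t0 \<eta> unfolding continuous_on_iff by (metis (no_types, lifting) case_prod_conv strip_iff)
  obtain d2 where d2: "d2 > 0" "\<And>r. r \<in> strip T \<Longrightarrow> dist r (s0 + e, t0) < d2 \<Longrightarrow>
      dist ((\<lambda>(x,t). q x t) r) (q (s0 + e) t0) < \<eta>"
    using q_cont t0 \<eta> unfolding continuous_on_iff by (metis (no_types, lifting) case_prod_conv strip_iff)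
  define d where "d = min (min d1 d2) \<eta>"
  have d: "d > 0" using d1 d2 \<eta> by (simp add: d_def)
  show "\<exists>d>0. \<forall>r\<in>strip T. dist r p < d \<longrightarrow> dist ((\<lambda>(x,t). sig x t) r) ((\<lambda>(x,t). sig x t) p) < e"
  proof (intro exI[of _ d] conjI ballI impI d)
    fix r assume r: "r \<in> strip T" "dist r p < d"
    obtain x t where rr: "r = (x,t)" by (cases r)
    have t: "t \<in> Y T" using r rr by simp
    have dx: "\<bar>x - x0\<bar> < d" using dist_fst_le[of r p] r(2) rr p0 by (simp add: dist_real_def)
    have dt: "\<bar>t - t0\<bar> < d" using dist_snd_le[of r p] r(2) rr p0 by (simp add: dist_real_def)
    have "dist (s0 - e, t) (s0 - e, t0) = \<bar>t - t0\<bar>" by (simp add: dist_Pair_Pair dist_real_def)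
    hence "\<bar>q (s0 - e) t - q (s0 - e) t0\<bar> < \<eta>" using d1(2)[of "(s0 - e, t)"] t dt unfolding d_def
      by (simp add: dist_real_def)
    hence a: "q (s0 - e) t < x" using dx \<eta>1 unfolding d_def by linarith
    have "dist (s0 + e, t) (s0 + e, t0) = \<bar>t - t0\<bar>" by (simp add: dist_Pair_Pair dist_real_def)
    hence "\<bar>q (s0 + e) t - q (s0 + e) t0\<bar> < \<eta>" using d2(2)[of "(s0 + e, t)"] t dt unfolding d_def
      by (simp add: dist_real_def)
    hence b: "x < q (s0 + e) t" using dx \<eta>1 unfolding d_def by linarith
    have "s0 - e < sig x t" using a sig_q[OF t, of x] q_mono_iff[OF t] by metis
    moreover have "sig x t < s0 + e" using b sig_q[OF t, of x] q_mono_iff[OF t] by metis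
    ultimately show "dist ((\<lambda>(x,t). sig x t) r) ((\<lambda>(x,t). sig x t) p) < e"
      using rr p0 s0_def by (simp add: dist_real_def abs_less_iff)
  qed
qed

lemma sig_cont_x: assumes "t \<in> Y T" shows "isCont (\<lambda>x. sig x t) x"
  using cont_slice[OF sig_cont assms] by (simp add: continuous_on_eq_continuous_at)

lemma sig_cont_t: assumes "t \<in> Y T" shows "((\<lambda>t. sig x t) \<longlongrightarrow> sig x t) (at t within Y T)"
proof -
  have "continuous_on (Y T) (\<lambda>t. (\<lambda>(x,t). sig x t) (x, t))"
    by (rule continuous_on_compose2[OF sig_cont]) (auto intro!: continuous_intros)
  thus ?thesis using assms by (auto simp: continuous_on_def)
qed

lemma sig_dx: assumes "t \<in> Y T"
  shows "((\<lambda>x. sig x t) has_real_derivative inverse (J (sig x t) t)) (at x)"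
proof (rule DERIV_inverse_function[where f="\<lambda>s. q s t" and a="x - 1" and b="x + 1"])
  show "((\<lambda>s. q s t) has_real_derivative J (sig x t) t) (at (sig x t))"
    using qJ assms unfolding dx_ok_def by blast
  show "J (sig x t) t \<noteq> 0" using J_pos[OF assms] by (metis less_irrefl)
qed (use sig_q[OF assms] sig_cont_x[OF assms] in auto)

lemma sig_dt: assumes t0: "t0 \<in> Y T"
  shows "((\<lambda>t. sig x t) has_real_derivative (-1) * qt (sig x t0) t0 * inverse (J (sig x t0) t0))
    (at t0 within Y T)"
proof -
  define \<alpha> where "\<alpha> = (\<lambda>t. sig x t)"
  obtain \<xi> where \<xi>: "\<And>t. t \<in> Y T \<Longrightarrow> q (\<alpha> t) t - q (\<alpha> t0) t = (\<alpha> t - \<alpha> t0) * J (\<xi> t) t"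
    "((\<lambda>t. J (\<xi> t) t) \<longlongrightarrow> J (\<alpha> t0) t0) (at t0 within Y T)"
    using mvt_tendsto[OF qJ J_cont t0, of \<alpha>] sig_cont_t[OF t0] unfolding \<alpha>_def by blast
  have q2: "((\<lambda>t. (q (\<alpha> t0) t - q (\<alpha> t0) t0) / (t - t0)) \<longlongrightarrow> qt (\<alpha> t0) t0) (at t0 within Y T)"
    using qqt t0 unfolding dt_ok_def has_field_derivative_iff by blast
  have Jne: "J (\<alpha> t0) t0 \<noteq> 0" using J_pos[OF t0] by (metis less_irrefl)
  have lim: "((\<lambda>t. (-1) * ((q (\<alpha> t0) t - q (\<alpha> t0) t0) / (t - t0)) / J (\<xi> t) t)
      \<longlongrightarrow> (-1) * qt (\<alpha> t0) t0 / J (\<alpha> t0) t0) (at t0 within Y T)"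
    by (intro tendsto_divide tendsto_mult tendsto_const q2 \<xi>(2) Jne)
  have "eventually (\<lambda>t. (-1) * ((q (\<alpha> t0) t - q (\<alpha> t0) t0) / (t - t0)) / J (\<xi> t) t
      = (\<alpha> t - \<alpha> t0) / (t - t0)) (at t0 within Y T)"
    unfolding eventually_at_filter
  proof (intro always_eventually allI impI)
    fix t assume tt: "t \<noteq> t0" "t \<in> Y T"
    have Jp: "J (\<xi> t) t \<noteq> 0" using J_pos[OF tt(2)] by (metis less_irrefl)
    have "q (\<alpha> t) t = x" "q (\<alpha> t0) t0 = x" using sig_q tt t0 unfolding \<alpha>_def by auto
    hence e: "(\<alpha> t - \<alpha> t0) * J (\<xi> t) t = -(q (\<alpha> t0) t - q (\<alpha> t0) t0)" using \<xi>(1)[OF tt(2)] by simp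
    have "t - t0 \<noteq> 0" using tt by simp
    have e2: "\<alpha> t - \<alpha> t0 = -(q (\<alpha> t0) t - q (\<alpha> t0) t0) / J (\<xi> t) t"
      using e Jp by (simp add: eq_divide_eq)
    show "(-1) * ((q (\<alpha> t0) t - q (\<alpha> t0) t0) / (t - t0)) / J (\<xi> t) t = (\<alpha> t - \<alpha> t0) / (t - t0)"
      unfolding e2 by simp
  qed
  from tendsto_cong[OF this] lim
  have "(\<alpha> has_real_derivative (-1) * qt (\<alpha> t0) t0 / J (\<alpha> t0) t0) (at t0 within Y T)"
    unfolding has_field_derivative_iff by simp
  thus ?thesis unfolding \<alpha>_def by (simp add: divide_inverse)
qed

lemma transfer: assumes "sm T H" shows "sm T (\<lambda>x t. H (sig x t) t)"
proof -
  have "\<exists>H. sm T H \<and> G = (\<lambda>x t. H (sig x t) t) \<Longrightarrow> sm T G" for G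
  proof (rule sm_coinduct_simple[where X="\<lambda>G. \<exists>H. sm T H \<and> G = (\<lambda>x t. H (sig x t) t)"])
    fix G :: "real \<Rightarrow> real \<Rightarrow> real"
    assume "\<exists>H. sm T H \<and> G = (\<lambda>x t. H (sig x t) t)"
    then obtain H where H: "sm T H" and G: "G = (\<lambda>x t. H (sig x t) t)" by blast
    define Hs where "Hs = Px T H"
    define Ht where "Ht = Pt T H"
    have hs: "dx_ok T H Hs" "sm T Hs" using sm_Px[OF H] Hs_def by auto
    have ht: "dt_ok T H Ht" "sm T Ht" using sm_Pt[OF H] Ht_def by auto
    have cHs: "continuous_on (strip T) (\<lambda>(x,t). Hs x t)" using sm_cont[OF hs(2)] .
    have inv_cl: "cl T (\<lambda>s \<tau>. inverse (J s \<tau>))"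
      by (rule cl_comp[OF _ sm1_inverse J_sm]) (use J_pos in auto)
    define L1 where "L1 = (\<lambda>s \<tau>. Hs s \<tau> * inverse (J s \<tau>))"
    define L2 where "L2 = (\<lambda>s \<tau>. Hs s \<tau> * ((-1) * qt s \<tau> * inverse (J s \<tau>)) + Ht s \<tau>)"
    have L1: "sm T L1" unfolding L1_def
      by (rule cl_imp_sm, rule cl_mul[OF cl_sm[OF hs(2)] inv_cl])
    have L2: "sm T L2" unfolding L2_def
      by (rule cl_imp_sm, rule cl_add[OF cl_mul[OF cl_sm[OF hs(2)] cl_mul[OF cl_mul[OF cl_sm[OF sm_const] cl_sm[OF qt_sm]] inv_cl]] cl_sm[OF ht(2)]])
    have cont: "continuous_on (strip T) (\<lambda>(x,t). G x t)"
    proof -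
      have sc: "continuous_on (strip T) (\<lambda>p. sig (fst p) (snd p))" using sig_cont by (simp add: split_beta)
      have "continuous_on (strip T) (\<lambda>p. (\<lambda>(x,t). H x t) ((\<lambda>(x,t). sig x t) p, snd p))"
        by (rule continuous_on_compose2[OF sm_cont[OF H]])
           (auto intro!: continuous_intros sc simp: split_beta)
      thus ?thesis unfolding G by (simp add: split_beta)
    qed
    have dx: "dx_ok T G (\<lambda>x t. L1 (sig x t) t)"
      unfolding dx_ok_def G L1_def
    proof (intro allI impI)
      fix x t assume t: "t \<in> Y T"
      show "((\<lambda>x. H (sig x t) t) has_real_derivative Hs (sig x t) t * inverse (J (sig x t) t)) (at x)"
        by (rule DERIV_chain2[OF _ sig_dx[OF t]]) (use hs t in \<open>auto simp: dx_ok_def\<close>)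
    qed
    have dt: "dt_ok T G (\<lambda>x t. L2 (sig x t) t)"
      unfolding dt_ok_def G L2_def
    proof (intro allI impI)
      fix x t assume t: "t \<in> Y T"
      show "((\<lambda>y. H (sig x y) y) has_real_derivative
          Hs (sig x t) t * ((-1) * qt (sig x t) t * inverse (J (sig x t) t)) + Ht (sig x t) t) (at t within Y T)"
        by (rule chain_t[OF hs(1) ht(1) cHs t sig_dt[OF t]])
    qed
    show "continuous_on (strip T) (\<lambda>(x,t). G x t) \<and>
      (\<exists>Gx Gt. dx_ok T G Gx \<and> dt_ok T G Gt \<and>
        ((\<exists>H. sm T H \<and> Gx = (\<lambda>x t. H (sig x t) t)) \<or> sm T Gx) \<and>
        ((\<exists>H. sm T H \<and> Gt = (\<lambda>x t. H (sig x t) t)) \<or> sm T Gt))"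
      using cont dx dt L1 L2 by blast
  qed
  thus ?thesis using assms by blast
qed

end


definition e1 :: "real^3" where "e1 = axis 1 1"
definition dir :: "(real^3 \<Rightarrow> real) \<Rightarrow> (real^3 \<Rightarrow> real)" where
  "dir w = (\<lambda>x. frechet_derivative w (at x) e1)"

lemma e1_Basis: "e1 \<in> Basis" unfolding e1_def by simp

lemma smooth_dir: assumes "smooth w"
  shows "smooth (dir w)" "\<And>x. (w has_derivative frechet_derivative w (at x)) (at x)"
    "continuous_on UNIV w"
proof -
  have "C_k (Suc k) w" for k using assms unfolding smooth_def by blast
  hence *: "w differentiable_on UNIV" "\<And>k. C_k k (dir w)" unfolding dir_def using e1_Basis by auto
  show "smooth (dir w)" unfolding smooth_def using * by blast
  show "\<And>x. (w has_derivative frechet_derivative w (at x)) (at x)"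
    using *(1) frechet_derivative_works unfolding differentiable_on_def by auto
  show "continuous_on UNIV w" using assms unfolding smooth_def by (metis C_k.simps(1))
qed

lemma line_deriv: assumes "smooth w"
  shows "((\<lambda>s. w (s *\<^sub>R e1)) has_real_derivative dir w (s *\<^sub>R e1)) (at s)"
proof -
  have l: "linear (frechet_derivative w (at (s *\<^sub>R e1)))"
    using smooth_dir(2)[OF assms] by (blast intro: has_derivative_linear)
  have "((\<lambda>s. w (s *\<^sub>R e1)) has_derivative (\<lambda>h. frechet_derivative w (at (s *\<^sub>R e1)) (h *\<^sub>R e1))) (at s)"
    by (rule has_derivative_compose[OF _ smooth_dir(2)[OF assms]]) (auto intro!: derivative_eq_intros)
  moreover have "(\<lambda>h. frechet_derivative w (at (s *\<^sub>R e1)) (h *\<^sub>R e1)) = (\<lambda>h. h * dir w (s *\<^sub>R e1))"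
    using l unfolding dir_def by (auto simp: linear_scale)
  moreover have "(\<lambda>h. h * dir w (s *\<^sub>R e1)) = (*) (dir w (s *\<^sub>R e1))" by (auto simp: fun_eq_iff)
  ultimately show ?thesis unfolding has_field_derivative_def by simp
qed

lemma sm1_line: assumes "smooth w" shows "sm1 UNIV (\<lambda>s. w (s *\<^sub>R e1))"
proof -
  have "\<exists>w. smooth w \<and> \<phi> = (\<lambda>s. w (s *\<^sub>R e1)) \<Longrightarrow> sm1 UNIV \<phi>" for \<phi>
  proof (rule sm1_coinduct_simple[where X="\<lambda>\<phi>. \<exists>w. smooth w \<and> \<phi> = (\<lambda>s. w (s *\<^sub>R e1))"])
    fix \<phi> :: "real \<Rightarrow> real" assume "\<exists>w. smooth w \<and> \<phi> = (\<lambda>s. w (s *\<^sub>R e1))"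
    then obtain w where w: "smooth w" "\<phi> = (\<lambda>s. w (s *\<^sub>R e1))" by blast
    show "\<exists>\<phi>'. (\<forall>x\<in>UNIV. (\<phi> has_real_derivative \<phi>' x) (at x)) \<and>
        ((\<exists>w. smooth w \<and> \<phi>' = (\<lambda>s. w (s *\<^sub>R e1))) \<or> sm1 UNIV \<phi>')"
      using line_deriv[OF w(1)] smooth_dir(1)[OF w(1)] w(2)
      by (intro exI[of _ "\<lambda>s. dir w (s *\<^sub>R e1)"]) blast
  qed
  thus ?thesis using assms by blast
qed

lemma profile_eq: assumes "radial u" shows "profile u s = u (s *\<^sub>R e1)"
proof -
  have "norm (\<bar>s\<bar> *\<^sub>R e1) = norm (s *\<^sub>R e1)" by (simp add: e1_def)
  thus ?thesis using assms unfolding radial_def profile_def e1_def by metis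
qed

lemma profile_zero: assumes "\<forall>x. norm x > M \<longrightarrow> u x = 0" "\<bar>s\<bar> > M" shows "profile u s = 0"
  using assms unfolding profile_def e1_def by simp

lemma sm1_exp: "sm1 UNIV exp"
  by (rule sm1_coinduct_simple[where X="\<lambda>\<phi>. \<phi> = exp"]) (auto intro: DERIV_exp)

definition E :: "nat \<Rightarrow> real \<Rightarrow> real" where
  "E k x = integral {0..1} (\<lambda>t. t ^ k * exp (t * x))"

lemma E_deriv: "(E k has_real_derivative E (Suc k) x) (at x)"
proof -
  have "((\<lambda>x. integral (cbox 0 1) (\<lambda>t. t ^ k * exp (t * x))) has_real_derivative
      integral (cbox 0 1) (\<lambda>t. t ^ k * (exp (t * x) * t))) (at x within UNIV)"
  proof (rule leibniz_rule_field_derivative)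
    show "continuous_on (UNIV \<times> cbox 0 1) (\<lambda>(x::real, t::real). t ^ k * (exp (t * x) * t))"
    proof -
      have f: "continuous_on (UNIV \<times> cbox 0 1) (\<lambda>p::real\<times>real. fst p)" "continuous_on (UNIV \<times> cbox 0 1) (\<lambda>p::real\<times>real. snd p)"
        by (auto intro: continuous_on_fst continuous_on_snd continuous_on_id)
      have "continuous_on (UNIV \<times> cbox 0 1) (\<lambda>p::real\<times>real. snd p ^ k * (exp (snd p * fst p) * snd p))"
        by (intro continuous_on_mult continuous_on_power continuous_on_exp f)
      thus ?thesis unfolding split_beta .
    qed
    show "\<And>x::real. x \<in> UNIV \<Longrightarrow> (\<lambda>t. t ^ k * exp (t * x)) integrable_on cbox 0 1"
      by (intro integrable_continuous continuous_on_mult continuous_on_power continuous_on_id continuous_on_exp continuous_on_const)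
  qed (auto intro!: derivative_eq_intros)
  thus ?thesis unfolding E_def by (simp add: mult_ac)
qed

lemma sm1_E: "sm1 UNIV (E k)"
proof -
  have "\<exists>k. \<phi> = E k \<Longrightarrow> sm1 UNIV \<phi>" for \<phi>
    by (rule sm1_coinduct_simple[where X="\<lambda>\<phi>. \<exists>k. \<phi> = E k"]) (auto intro: E_deriv)
  thus ?thesis by blast
qed

lemma E0_id: "x * E 0 x = exp x - 1"
proof -
  have "((\<lambda>t. x * exp (t * x)) has_integral (exp (1 * x) - exp (0 * x))) {0..1}"
    by (rule fundamental_theorem_of_calculus)
       (auto intro!: derivative_eq_intros simp: has_real_derivative_iff_has_vector_derivative[symmetric])
  hence h: "((\<lambda>t. x * exp (t * x)) has_integral (exp x - 1)) {0..1}" by simp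
  have "((\<lambda>t. exp (t * x)) has_integral E 0 x) {0..1}" unfolding E_def
    by (simp, intro integrable_integral integrable_continuous_real continuous_intros)
  hence "((\<lambda>t. x * exp (t * x)) has_integral x * E 0 x) {0..1}" by (rule has_integral_mult_right)
  thus ?thesis using h has_integral_unique by blast
qed

lemma E1_id: "x * E 1 x + E 0 x = exp x"
proof -
  have "((\<lambda>t. x * (t * exp (t * x)) + exp (t * x)) has_integral (1 * exp (1 * x) - 0 * exp (0 * x))) {0..1}"
    by (rule fundamental_theorem_of_calculus)
       (auto intro!: derivative_eq_intros simp: has_real_derivative_iff_has_vector_derivative[symmetric] algebra_simps)
  hence "integral {0..1} (\<lambda>t. x * (t * exp (t * x)) + exp (t * x)) = exp x" by (simp add: integral_unique)
  moreover have "integral {0..1} (\<lambda>t. x * (t * exp (t * x)) + exp (t * x)) =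
      x * integral {0..1} (\<lambda>t. t * exp (t * x)) + integral {0..1} (\<lambda>t. exp (t * x))"
    by (subst integral_add) (auto intro!: integrable_continuous_real continuous_intros)
  ultimately show ?thesis unfolding E_def by simp
qed

lemma E0_0: "E 0 0 = 1" unfolding E_def by simp

lemma integral_tail: assumes "\<And>y. y > K \<Longrightarrow> g y = 0"
  shows "integral {s..} g = integral {s..K} (g::real \<Rightarrow> real)"
proof -
  have "(\<lambda>y. if y \<in> {s..} then g y else 0) = (\<lambda>y. if y \<in> {s..K} then g y else 0)"
    using assms by (auto simp: fun_eq_iff)
  thus ?thesis by (metis integral_restrict_UNIV)
qed


lemma deriv_zero_out:
  assumes z: "\<And>y. \<bar>y\<bar> > M \<Longrightarrow> f y = 0" and d: "DERIV f s :> D" and s: "\<bar>s\<bar> > (M::real)"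
  shows "D = 0"
proof -
  have "open {y::real. \<bar>y\<bar> > M}" by (intro open_Collect_less continuous_intros)
  hence ev: "eventually (\<lambda>y. y \<in> {y. \<bar>y\<bar> > M}) (nhds s)" using s by (intro eventually_nhds_in_open) auto
  have "eventually (\<lambda>y. f y = 0) (nhds s)" by (rule eventually_mono[OF ev]) (use z in auto)
  hence "DERIV (\<lambda>_. 0) s :> D" using d DERIV_cong_ev[of s s f "\<lambda>_. 0" D D] by simp
  thus ?thesis using DERIV_const DERIV_unique by blast
qed

lemma zero_boundary:
  assumes c: "continuous_on UNIV f" and z: "\<And>y. \<bar>y\<bar> > M \<Longrightarrow> f y = (0::real)" and s: "\<bar>s\<bar> \<ge> (M::real)"
  shows "f s = 0"
proof (cases "\<bar>s\<bar> > M")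
  case True thus ?thesis using z by blast
next
  case False
  hence sM: "\<bar>s\<bar> = M" using s by simp
  have cl: "closed {y. f y = 0}" by (rule closed_Collect_eq[OF c continuous_on_const])
  show ?thesis
  proof (cases "s \<ge> 0")
    case True
    hence sM': "s = M" using sM by simp
    have "{M<..} \<subseteq> {y. f y = 0}" using z by auto
    hence "closure {M<..} \<subseteq> {y. f y = 0}" using cl closure_minimal by blast
    thus ?thesis using sM' by auto
  next
    case False
    hence sM': "s = -M" using sM by simp
    have "{..<-M} \<subseteq> {y. f y = 0}" using z by auto
    hence "closure {..<-M} \<subseteq> {y. f y = 0}" using cl closure_minimal by blast
    thus ?thesis using sM' by auto
  qed
qed

locale data =
  fixes u0 u1 :: "real^3 \<Rightarrow> real" and M :: real
  assumes M: "M > 0" and s0: "smooth u0" and s1: "smooth u1" and r0: "radial u0" and r1: "radial u1"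
    and z0: "\<forall>x. norm x > M \<longrightarrow> u0 x = 0" and z1: "\<forall>x. norm x > M \<longrightarrow> u1 x = 0"
begin

definition "p0 = (\<lambda>s. u0 (s *\<^sub>R e1))"
definition "p0' = (\<lambda>s. dir u0 (s *\<^sub>R e1))"
definition "p0'' = (\<lambda>s. dir (dir u0) (s *\<^sub>R e1))"
definition "p1 = (\<lambda>s. u1 (s *\<^sub>R e1))"
definition "p1' = (\<lambda>s. dir u1 (s *\<^sub>R e1))"

lemma sm1_p: "sm1 UNIV p0" "sm1 UNIV p0'" "sm1 UNIV p0''" "sm1 UNIV p1" "sm1 UNIV p1'"
  unfolding p0_def p0'_def p0''_def p1_def p1'_def
  using sm1_line s0 s1 smooth_dir(1) by blast+

lemma d_p: "DERIV p0 s :> p0' s" "DERIV p0' s :> p0'' s" "DERIV p1 s :> p1' s"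
  unfolding p0_def p0'_def p0''_def p1_def p1'_def
  using line_deriv s0 s1 smooth_dir(1) by blast+

lemma d_p1': "DERIV p1' s :> dir (dir u1) (s *\<^sub>R e1)"
  unfolding p1'_def using line_deriv s1 smooth_dir(1) by blast

lemma d_p0'': "DERIV p0'' s :> dir (dir (dir u0)) (s *\<^sub>R e1)"
  unfolding p0''_def using line_deriv s0 smooth_dir(1) by blast

lemma z_p0: "\<bar>y\<bar> > M \<Longrightarrow> p0 y = 0" unfolding p0_def e1_def using z0 by simp
lemma z_p1: "\<bar>y\<bar> > M \<Longrightarrow> p1 y = 0" unfolding p1_def e1_def using z1 by simp
lemma z_p0': "\<bar>y\<bar> > M \<Longrightarrow> p0' y = 0" using deriv_zero_out[OF z_p0 d_p(1)] by blast
lemma z_p0'': "\<bar>y\<bar> > M \<Longrightarrow> p0'' y = 0" using deriv_zero_out[OF z_p0' d_p(2)] by blast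
lemma z_p1': "\<bar>y\<bar> > M \<Longrightarrow> p1' y = 0" using deriv_zero_out[OF z_p1 d_p(3)] by blast

definition "a = (\<lambda>s. (p0 s + s * p0' s - s * p1 s) / 2)"
definition "b = (\<lambda>s. (2 * p0' s + s * p0'' s - p1 s - s * p1' s) / 2)"

lemma a_deriv: "DERIV a s :> b s"
proof -
  have "DERIV a s :> (p0' s + (p0' s + s * p0'' s) - (p1 s + s * p1' s)) / 2"
    unfolding a_def by (auto intro!: derivative_eq_intros d_p simp: field_simps)
  moreover have "(p0' s + (p0' s + s * p0'' s) - (p1 s + s * p1' s)) / 2 = b s" by (simp add: b_def)
  ultimately show ?thesis by simp
qed

lemma b_deriv: "\<exists>D. DERIV b s :> D"
  unfolding b_def
  by (rule exI, auto intro!: derivative_eq_intros d_p d_p1' d_p0'')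

lemma a_cont: "continuous_on UNIV a"
  using a_deriv by (intro continuous_at_imp_continuous_on) (blast intro: DERIV_isCont)
lemma b_cont: "continuous_on UNIV b"
  using b_deriv by (intro continuous_at_imp_continuous_on) (blast intro: DERIV_isCont)

lemma a_out: "\<bar>y\<bar> \<ge> M \<Longrightarrow> a y = 0"
  by (rule zero_boundary[OF a_cont]) (auto simp: a_def z_p0 z_p0' z_p1)
lemma b_out: "\<bar>y\<bar> \<ge> M \<Longrightarrow> b y = 0"
  by (rule zero_boundary[OF b_cont]) (auto simp: b_def z_p0' z_p0'' z_p1 z_p1')

definition "K = M + 1"

lemma p1_cont: "continuous_on UNIV p1"
  using d_p(3) by (intro continuous_at_imp_continuous_on) (blast intro: DERIV_isCont)

lemma F0_eq: "F0 u0 u1 s = (s * p0 s + integral {s..K} (\<lambda>\<rho>. \<rho> * p1 \<rho>)) / 2"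
proof -
  have pe: "profile u0 = p0" "profile u1 = p1" using profile_eq r0 r1 unfolding p0_def p1_def by auto
  have "integral {s..} (\<lambda>\<rho>. \<rho> * p1 \<rho>) = integral {s..K} (\<lambda>\<rho>. \<rho> * p1 \<rho>)"
    by (rule integral_tail) (use z_p1 M in \<open>auto simp: K_def\<close>)
  thus ?thesis unfolding F0_def pe by simp
qed

lemma F0_deriv: "DERIV (F0 u0 u1) s :> a s"
proof -
  have c: "continuous_on UNIV (\<lambda>\<rho>. \<rho> * p1 \<rho>)" by (intro continuous_intros p1_cont)
  have i: "((\<lambda>x. integral {x..K} (\<lambda>\<rho>. \<rho> * p1 \<rho>)) has_real_derivative - (s * p1 s)) (at s)"
    by (rule int_dx[OF c]) (use z_p1 M in \<open>auto simp: K_def\<close>)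
  have "((\<lambda>s. (s * p0 s + integral {s..K} (\<lambda>\<rho>. \<rho> * p1 \<rho>)) / 2) has_real_derivative
      (1 * p0 s + s * p0' s + - (s * p1 s)) / 2) (at s)"
    by (auto intro!: derivative_eq_intros d_p i simp: field_simps)
  moreover have "(1 * p0 s + s * p0' s + - (s * p1 s)) / 2 = a s" by (simp add: a_def)
  ultimately show ?thesis unfolding F0_eq[abs_def] by simp
qed

lemma deriv_F0: "deriv (F0 u0 u1) = a" using F0_deriv DERIV_imp_deriv by blast
lemma deriv2_F0: "deriv (deriv (F0 u0 u1)) = b" unfolding deriv_F0 using a_deriv DERIV_imp_deriv by blast

lemma F0_K: "F0 u0 u1 K = 0"
  unfolding F0_eq using z_p0[of K] M by (simp add: K_def)

end


lemma cl_eq_sm: "cl T F \<Longrightarrow> (\<And>x t. t \<in> Y T \<Longrightarrow> F x t = G x t) \<Longrightarrow> sm T G"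
  using cl_imp_sm sm_cong by blast

lemma cl_fun: "sm1 UNIV f \<Longrightarrow> cl T (\<lambda>x t. f x)"
  using cl_comp[OF open_UNIV _ sm_x, of f] by simp

lemma cl_x: "cl T (\<lambda>x t. x)" by (rule cl_sm[OF sm_x])
lemma cl_t: "cl T (\<lambda>x t. t)" by (rule cl_sm[OF sm_t])
lemma cl_c: "cl T (\<lambda>x t. c)" by (rule cl_sm[OF sm_const])

context data begin

definition "J = (\<lambda>s \<tau>. exp (a s * \<tau> / 2) - b s * \<tau> / 2 * E 0 (a s * \<tau> / 2))"
definition "Jt = (\<lambda>s \<tau>. (a s - b s) * exp (a s * \<tau> / 2) / 2)"
definition "q = (\<lambda>s \<tau>. s - integral {s..K} (\<lambda>y. J y \<tau> - 1))"
definition "qt = (\<lambda>s \<tau>. - integral {s..K} (\<lambda>y. Jt y \<tau>))"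
definition "G = (\<lambda>s \<tau>. - integral {s..K} (\<lambda>y. a y * J y \<tau>))"

lemma sm_a: "sm T (\<lambda>s \<tau>. a s)"
proof (rule cl_eq_sm)
  show "cl T (\<lambda>s \<tau>. (1/2) * (p0 s + (s * p0' s + (-1) * (s * p1 s))))"
    by (intro cl_mul cl_add cl_c cl_x cl_fun sm1_p)
qed (simp add: a_def field_simps)

lemma sm_b: "sm T (\<lambda>s \<tau>. b s)"
proof (rule cl_eq_sm)
  show "cl T (\<lambda>s \<tau>. (1/2) * (2 * p0' s + (s * p0'' s + ((-1) * p1 s + (-1) * (s * p1' s)))))"
    by (intro cl_mul cl_add cl_c cl_x cl_fun sm1_p)
qed (simp add: b_def field_simps)

lemma sm_z: "sm T (\<lambda>s \<tau>. a s * \<tau> / 2)"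
  by (rule cl_eq_sm[OF cl_mul[OF cl_mul[OF cl_sm[OF sm_a] cl_t] cl_c[of _ "1/2"]]]) simp

lemma sm_J: "sm T J"
proof (rule cl_eq_sm)
  show "cl T (\<lambda>s \<tau>. exp (a s * \<tau> / 2) + (-1) * ((b s * \<tau> * (1/2)) * E 0 (a s * \<tau> / 2)))"
    by (intro cl_add cl_mul cl_c cl_t cl_sm[OF sm_b] cl_comp[OF open_UNIV sm1_exp sm_z]
        cl_comp[OF open_UNIV sm1_E sm_z]) auto
qed (simp add: J_def)

lemma sm_Jt: "sm T Jt"
proof (rule cl_eq_sm)
  show "cl T (\<lambda>s \<tau>. (a s + (-1) * b s) * exp (a s * \<tau> / 2) * (1/2))"
    by (intro cl_add cl_mul cl_c cl_sm[OF sm_b] cl_sm[OF sm_a] cl_comp[OF open_UNIV sm1_exp sm_z]) auto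
qed (simp add: Jt_def)

lemma sm_J1: "sm T (\<lambda>s \<tau>. J s \<tau> - 1)"
  by (rule cl_eq_sm[OF cl_add[OF cl_sm[OF sm_J] cl_c[of _ "-1"]]]) simp

lemma sm_aJ: "sm T (\<lambda>s \<tau>. a s * J s \<tau>)"
  by (rule cl_eq_sm[OF cl_mul[OF cl_sm[OF sm_a] cl_sm[OF sm_J]]]) simp

lemma J_0: "J s 0 = 1" by (simp add: J_def)

lemma J_out: "\<bar>s\<bar> \<ge> M \<Longrightarrow> J s \<tau> = 1" by (simp add: J_def a_out b_out)
lemma Jt_out: "\<bar>s\<bar> \<ge> M \<Longrightarrow> Jt s \<tau> = 0" by (simp add: Jt_def a_out b_out)

lemma K_gt: "K > M" by (simp add: K_def)

lemma sm_q: "sm T q"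
proof (rule cl_eq_sm)
  show "cl T (\<lambda>s \<tau>. s + (-1) * integral {s..K} (\<lambda>y. J y \<tau> - 1))"
  proof (intro cl_add cl_mul cl_x cl_c cl_int[OF sm_J1])
    fix x t assume "K \<le> x" thus "J x t - 1 = 0" using J_out K_gt by simp
  qed
qed (simp add: q_def)

lemma sm_qt: "sm T qt"
proof (rule cl_eq_sm)
  show "cl T (\<lambda>s \<tau>. (-1) * integral {s..K} (\<lambda>y. Jt y \<tau>))"
  proof (intro cl_add cl_mul cl_x cl_c cl_int[OF sm_Jt])
    fix x t assume "K \<le> x" thus "Jt x t = 0" using Jt_out K_gt by simp
  qed
qed (simp add: qt_def)

lemma sm_G: "sm T G"
proof (rule cl_eq_sm)
  show "cl T (\<lambda>s \<tau>. (-1) * integral {s..K} (\<lambda>y. a y * J y \<tau>))"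
  proof (intro cl_add cl_mul cl_x cl_c cl_int[OF sm_aJ])
    fix x t assume "K \<le> x" thus "a x * J x t = 0" using a_out K_gt by simp
  qed
qed (simp add: G_def)

end


context data begin

lemma J_dt: "((\<lambda>\<tau>. J s \<tau>) has_real_derivative Jt s \<tau>) (at \<tau>)"
proof -
  define z where "z = a s * \<tau> / 2"
  have d: "((\<lambda>\<tau>. J s \<tau>) has_real_derivative
     exp z * (a s / 2) - (b s / 2 * E 0 z + b s * \<tau> / 2 * (E 1 z * (a s / 2)))) (at \<tau>)"
    unfolding J_def z_def
    by (auto intro!: derivative_eq_intros E_deriv[THEN DERIV_chain2] simp: field_simps)
  have i1: "z * E 1 z + E 0 z = exp z" by (rule E1_id)
  have "b s * \<tau> / 2 * (E 1 z * (a s / 2)) = b s / 2 * (z * E 1 z)" by (simp add: z_def field_simps)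
  also have "\<dots> = b s / 2 * (exp z - E 0 z)" using i1 by (metis add_diff_cancel_right')
  finally have "exp z * (a s / 2) - (b s / 2 * E 0 z + b s * \<tau> / 2 * (E 1 z * (a s / 2))) = Jt s \<tau>"
    unfolding Jt_def z_def by (simp add: field_simps)
  thus ?thesis using d by simp
qed

lemma two_Jt: "2 * Jt s \<tau> = a s * J s \<tau> - b s"
proof -
  define z where "z = a s * \<tau> / 2"
  have i0: "z * E 0 z = exp z - 1" by (rule E0_id)
  have "a s * (b s * \<tau> / 2 * E 0 z) = b s * (z * E 0 z)" by (simp add: z_def field_simps)
  also have "\<dots> = b s * (exp z - 1)" using i0 by simp
  finally have e: "a s * (b s * \<tau> / 2 * E 0 z) = b s * (exp z - 1)" .
  have "a s * J s \<tau> - b s = a s * exp z - a s * (b s * \<tau> / 2 * E 0 z) - b s"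
    by (simp add: J_def z_def right_diff_distrib)
  also have "\<dots> = a s * exp z - b s * exp z" unfolding e by (simp add: right_diff_distrib)
  also have "\<dots> = 2 * Jt s \<tau>" by (simp add: Jt_def z_def left_diff_distrib)
  finally show ?thesis by simp
qed

lemma J_cont_slice: "t \<in> Y T \<Longrightarrow> continuous_on UNIV (\<lambda>y. J y t)"
  using cont_slice[OF sm_cont[OF sm_J]] by blast

lemma qJ: "dx_ok T q J"
  unfolding dx_ok_def
proof (intro allI impI)
  fix x t assume t: "t \<in> Y T"
  have c: "continuous_on UNIV (\<lambda>y. J y t - 1)" by (intro continuous_intros J_cont_slice[OF t])
  have "((\<lambda>x. integral {x..K} (\<lambda>y. J y t - 1)) has_real_derivative - (J x t - 1)) (at x)"
    by (rule int_dx[OF c]) (use J_out K_gt in auto)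
  hence "((\<lambda>x. x - integral {x..K} (\<lambda>y. J y t - 1)) has_real_derivative 1 - (- (J x t - 1))) (at x)"
    by (intro derivative_intros)
  thus "((\<lambda>x. q x t) has_real_derivative J x t) (at x)" unfolding q_def by simp
qed

lemma qqt: "dt_ok T q qt"
proof -
  have d1: "dt_ok T (\<lambda>s \<tau>. J s \<tau> - 1) Jt"
    unfolding dt_ok_def
  proof (intro allI impI)
    fix x t assume "t \<in> Y T"
    show "((\<lambda>y. J x y - 1) has_real_derivative Jt x t) (at t within Y T)"
      using has_field_derivative_at_within[OF DERIV_diff[OF J_dt[of x t] DERIV_const]] by simp
  qed
  have "dt_ok T (\<lambda>x t. integral {x..K} (\<lambda>y. J y t - 1)) (\<lambda>x t. integral {x..K} (\<lambda>y. Jt y t))"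
    using int_dt[OF d1 sm_cont[OF sm_Jt] sm_cont[OF sm_J1]] by simp
  thus ?thesis unfolding dt_ok_def q_def qt_def
  proof (intro allI impI)
    fix x t assume I: "\<forall>x t. t \<in> Y T \<longrightarrow> ((\<lambda>y. integral {x..K} (\<lambda>ya. J ya y - 1)) has_real_derivative integral {x..K} (\<lambda>y. Jt y t)) (at t within Y T)"
      and t: "t \<in> Y T"
    have "((\<lambda>y. x - integral {x..K} (\<lambda>ya. J ya y - 1)) has_real_derivative 0 - integral {x..K} (\<lambda>y. Jt y t)) (at t within Y T)"
      using DERIV_diff[OF DERIV_const I[rule_format, OF t]] .
    thus "((\<lambda>y. x - integral {x..K} (\<lambda>y'. J y' y - 1)) has_real_derivative - integral {x..K} (\<lambda>y. Jt y t)) (at t within Y T)"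
      by simp
  qed
qed

lemma G_dx: "dx_ok T G (\<lambda>s \<tau>. a s * J s \<tau>)"
  unfolding dx_ok_def
proof (intro allI impI)
  fix x t assume t: "t \<in> Y T"
  have c: "continuous_on UNIV (\<lambda>y. a y * J y t)" by (intro continuous_intros J_cont_slice[OF t] a_cont)
  have "((\<lambda>x. integral {x..K} (\<lambda>y. a y * J y t)) has_real_derivative - (a x * J x t)) (at x)"
    by (rule int_dx[OF c]) (use a_out K_gt in auto)
  hence "((\<lambda>x. - integral {x..K} (\<lambda>y. a y * J y t)) has_real_derivative - (- (a x * J x t))) (at x)"
    by (intro derivative_intros)
  thus "((\<lambda>x. G x t) has_real_derivative a x * J x t) (at x)" unfolding G_def by simp
qed

end


context data begin

definition "T0 = tau0 (F0 u0 u1) M"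

lemma J_zero_imp: assumes J0: "J s \<tau>1 = 0" and pos: "\<tau>1 > 0" shows "T0 \<le> ereal \<tau>1"
proof -
  let ?F = "F0 u0 u1"
  let ?S = "(\<lambda>s. ereal (tau_fun ?F s)) ` setA ?F M \<union> (\<lambda>s. ereal (2 / deriv (deriv ?F) s)) ` setB ?F M"
  have mem: "ereal \<tau>1 \<in> ?S"
  proof (cases "a s = 0")
    case False
    define z where "z = a s * \<tau>1 / 2"
    have "\<not> \<bar>s\<bar> \<ge> M" using a_out False by blast
    hence sM: "-M < s" "s < M" by auto
    have i0: "z * E 0 z = exp z - 1" by (rule E0_id)
    have "0 = a s * J s \<tau>1" using J0 by simp
    also have "\<dots> = a s * (exp z - b s * \<tau>1 / 2 * E 0 z)" unfolding J_def z_def by simp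
    also have "\<dots> = a s * exp z - b s * (z * E 0 z)" unfolding z_def by (simp add: right_diff_distrib mult_ac)
    also have "\<dots> = a s * exp z - b s * (exp z - 1)" using i0 by simp
    finally have eq0: "0 = a s * exp z - b s * (exp z - 1)" .
    have eq: "(b s - a s) * exp z = b s" using eq0 by (simp add: left_diff_distrib right_diff_distrib)
    have ba: "b s - a s \<noteq> 0"
    proof
      assume "b s - a s = 0" hence "b s = 0" using eq by simp
      thus False using \<open>b s - a s = 0\<close> False by simp
    qed
    have R: "b s / (b s - a s) = exp z" using eq ba by (simp add: field_simps)
    have lnR: "ln (b s / (b s - a s)) = z" unfolding R by simp
    have tf: "tau_fun ?F s = \<tau>1" unfolding tau_fun_def unfolding deriv2_F0 unfolding deriv_F0 lnR z_def
      using False by simp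
    have Rp: "b s / (b s - a s) > 0" unfolding R by simp
    have "s \<in> setA ?F M" unfolding setA_def tau_fun_def[symmetric] unfolding deriv2_F0 unfolding deriv_F0 mem_Collect_eq
      using sM False Rp tf pos by simp
    hence "ereal (tau_fun ?F s) \<in> (\<lambda>s. ereal (tau_fun ?F s)) ` setA ?F M" by (rule imageI)
    thus ?thesis using tf by simp
  next
    case True
    have "0 = J s \<tau>1" using J0 by simp
    also have "\<dots> = 1 - b s * \<tau>1 / 2" by (simp add: J_def True E0_0)
    finally have bt: "b s * \<tau>1 = 2" by simp
    hence bpos: "b s > 0" using pos by (smt (verit) mult_nonpos_nonneg)
    have "\<not> \<bar>s\<bar> \<ge> M" using b_out bpos by fastforce
    hence sM: "-M < s" "s < M" by auto
    have "2 / b s = \<tau>1" using bt bpos by (simp add: field_simps)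
    moreover have "s \<in> setB ?F M" unfolding setB_def unfolding deriv2_F0 unfolding deriv_F0 using sM True bpos by auto
    hence "ereal (2 / deriv (deriv ?F) s) \<in> (\<lambda>s. ereal (2 / deriv (deriv ?F) s)) ` setB ?F M" by (rule imageI)
    ultimately show ?thesis unfolding deriv2_F0 by simp
  qed
  show ?thesis unfolding T0_def tau0_def using mem by (rule Inf_lower)
qed

lemma J_cont_t: "continuous_on UNIV (\<lambda>\<tau>. J s \<tau>)"
  using J_dt by (intro continuous_at_imp_continuous_on) (blast intro: DERIV_isCont)

lemma J_pos: assumes t: "\<tau> \<in> Y T0" shows "J s \<tau> > 0"
proof (rule ccontr)
  assume "\<not> J s \<tau> > 0"
  hence le: "J s \<tau> \<le> 0" by simp
  have t0: "0 \<le> \<tau>" "ereal \<tau> < T0" using t by auto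
  obtain \<tau>1 where \<tau>1: "0 \<le> \<tau>1" "\<tau>1 \<le> \<tau>" "J s \<tau>1 = 0"
    using IVT2'[of "\<lambda>\<tau>. J s \<tau>" \<tau> 0 0] le J_0 t0 continuous_on_subset[OF J_cont_t] by auto
  have "\<tau>1 \<noteq> 0" using \<tau>1 J_0 by auto
  hence "\<tau>1 > 0" using \<tau>1 by simp
  hence "T0 \<le> ereal \<tau>1" using J_zero_imp \<tau>1 by blast
  moreover have "ereal \<tau>1 \<le> ereal \<tau>" using \<tau>1 by simp
  ultimately show False using t0 by (meson leD order_trans)
qed

lemma q_right: assumes "s \<ge> M" shows "q s t = s"
proof -
  have "integral {s..K} (\<lambda>y. J y t - 1) = integral {s..K} (\<lambda>y. 0)"
    by (rule integral_cong) (use J_out assms in auto)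
  thus ?thesis unfolding q_def by simp
qed

lemma q_surj: assumes t: "t \<in> Y T" shows "\<exists>s. q s t = x"
proof -
  have c: "continuous_on UNIV (\<lambda>y. J y t - 1)" by (intro continuous_intros J_cont_slice[OF t])
  define c0 where "c0 = integral {-M..K} (\<lambda>y. J y t - 1)"
  have left: "q s t = s - c0" if s: "s \<le> -M" for s
  proof -
    have "integral {s..-M} (\<lambda>y. J y t - 1) + integral {-M..K} (\<lambda>y. J y t - 1) = integral {s..K} (\<lambda>y. J y t - 1)"
      by (rule Henstock_Kurzweil_Integration.integral_combine)
         (use s M K_gt in \<open>auto intro!: integrable_continuous_real continuous_on_subset[OF c]\<close>)
    moreover have "integral {s..-M} (\<lambda>y. J y t - 1) = integral {s..-M} (\<lambda>y. 0)"
      by (rule integral_cong) (use J_out in auto)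
    ultimately show ?thesis unfolding q_def c0_def by simp
  qed
  define L where "L = min x (-M) - \<bar>c0\<bar>"
  define U where "U = max x M"
  have L: "L \<le> -M" using M by (simp add: L_def)
  have qL: "q L t \<le> x" using left[OF L] by (simp add: L_def)
  have qU: "x \<le> q U t" using q_right[of U t] by (simp add: U_def)
  have LU: "L \<le> U" using M by (simp add: L_def U_def)
  have cq: "continuous_on {L..U} (\<lambda>s. q s t)"
    using continuous_on_subset[OF cont_slice[OF sm_cont[OF sm_q] t]] by blast
  show ?thesis using IVT'[of "\<lambda>s. q s t" L x U, OF qL qU LU cq] by blast
qed

sublocale lg: lag T0 q J qt
  by unfold_locales (use sm_q qJ qqt sm_J sm_qt J_pos q_surj in auto)

end


context data begin

definition "V = (\<lambda>x t. G (lg.sig x t) t)"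

lemma sm_V: "sm T0 V" unfolding V_def by (rule lg.transfer[OF sm_G])

lemma q0: "q s 0 = s"
proof -
  have "integral {s..K} (\<lambda>y. J y 0 - 1) = integral {s..K} (\<lambda>y. 0)"
    by (rule integral_cong) (simp add: J_0)
  thus ?thesis unfolding q_def by simp
qed

lemma sig0: "lg.sig x 0 = x"
  unfolding lg.sig_def q0 by simp

lemma G0: "G x 0 = F0 u0 u1 x"
proof (cases "x \<le> K")
  case True
  have "(a has_integral (F0 u0 u1 K - F0 u0 u1 x)) {x..K}"
    by (rule fundamental_theorem_of_calculus)
       (use True F0_deriv in \<open>auto simp: has_real_derivative_iff_has_vector_derivative[symmetric]
          intro: has_field_derivative_at_within\<close>)
  hence "integral {x..K} a = - F0 u0 u1 x" using F0_K by (simp add: integral_unique)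
  thus ?thesis unfolding G_def by (simp add: J_0)
next
  case False
  hence "\<bar>x\<bar> > M" using K_gt by auto
  hence "F0 u0 u1 x = 0" unfolding F0_eq using False z_p0 by simp
  thus ?thesis unfolding G_def using False by simp
qed

lemma lag_ident: assumes t: "t \<in> Y T0" shows "2 * qt s t = G s t - a s"
proof -
  have cJ: "continuous_on UNIV (\<lambda>y. J y t)" using J_cont_slice[OF t] .
  have ib: "integral {s..K} b = - a s"
  proof (cases "s \<le> K")
    case True
    have "(b has_integral (a K - a s)) {s..K}"
      by (rule fundamental_theorem_of_calculus)
         (use True a_deriv in \<open>auto simp: has_real_derivative_iff_has_vector_derivative[symmetric]
            intro: has_field_derivative_at_within\<close>)
    moreover have "a K = 0" using a_out K_gt by simp
    ultimately show ?thesis by (simp add: integral_unique)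
  next
    case False thus ?thesis using a_out K_gt by simp
  qed
  have int1: "(\<lambda>y. a y * J y t) integrable_on {s..K}"
    by (intro integrable_continuous_real continuous_intros continuous_on_subset[OF cJ] continuous_on_subset[OF a_cont]) auto
  have int2: "b integrable_on {s..K}"
    by (intro integrable_continuous_real continuous_on_subset[OF b_cont]) auto
  have "2 * qt s t = - integral {s..K} (\<lambda>y. 2 * Jt y t)" unfolding qt_def by simp
  also have "\<dots> = - integral {s..K} (\<lambda>y. a y * J y t - b y)" by (simp add: two_Jt)
  also have "\<dots> = - (integral {s..K} (\<lambda>y. a y * J y t) - integral {s..K} b)"
    using integral_diff[OF int1 int2] by simp
  also have "\<dots> = G s t - a s" unfolding G_def ib by simp
  finally show ?thesis .
qed

lemma sd_dx: "smooth_derivs T D \<Longrightarrow> t \<in> Y T \<Longrightarrow> ((\<lambda>x. D i j x t) has_real_derivative D (Suc i) j y t) (at y)"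
  unfolding smooth_derivs_def by simp
lemma sd_dt: "smooth_derivs T D \<Longrightarrow> t \<in> Y T \<Longrightarrow> ((\<lambda>y. D i j x y) has_real_derivative D i (Suc j) x t) (at t within Y T)"
  unfolding smooth_derivs_def by simp

abbreviation "DD \<equiv> (\<lambda>i j x t. ((Px T0 ^^ i) ((Pt T0 ^^ j) V)) x t)"

lemma DD_sd: "smooth_derivs T0 DD" by (rule sm_family[OF sm_V])

lemma DD_facts:
  assumes xt: "(x,t) \<in> strip T0"
  shows "DD 1 0 x t = a (lg.sig x t)"
    "DD 2 0 x t = b (lg.sig x t) * inverse (J (lg.sig x t) t)"
    "DD 1 1 x t = b (lg.sig x t) * ((-1) * qt (lg.sig x t) t * inverse (J (lg.sig x t) t))"
    "DD 0 0 x t = G (lg.sig x t) t"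
proof -
  have t: "t \<in> Y T0" using xt by simp
  note sdx = sd_dx[OF DD_sd] and sdt = sd_dt[OF DD_sd]
  have D10: "DD 1 0 y t = a (lg.sig y t)" for y
  proof -
    have d1: "((\<lambda>x. DD 0 0 x t) has_real_derivative DD 1 0 y t) (at y)" using sdx[OF t, of 0 0 y] by simp
    have "((\<lambda>x. G (lg.sig x t) t) has_real_derivative a (lg.sig y t) * J (lg.sig y t) t * inverse (J (lg.sig y t) t)) (at y)"
      by (rule DERIV_chain2[OF _ lg.sig_dx[OF t]]) (use G_dx t in \<open>auto simp: dx_ok_def\<close>)
    moreover have "J (lg.sig y t) t \<noteq> 0" using J_pos[OF t] by (metis less_irrefl)
    ultimately have "((\<lambda>x. G (lg.sig x t) t) has_real_derivative a (lg.sig y t)) (at y)"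
      by (simp add: mult.assoc)
    thus ?thesis using d1 DERIV_unique unfolding V_def by simp
  qed
  thus "DD 1 0 x t = a (lg.sig x t)" .
  have d2: "((\<lambda>x. DD 1 0 x t) has_real_derivative DD 2 0 x t) (at x)" using sdx[OF t, of 1 0 x]
    by (simp add: numeral_2_eq_2)
  have "((\<lambda>y. a (lg.sig y t)) has_real_derivative b (lg.sig x t) * inverse (J (lg.sig x t) t)) (at x)"
    by (rule DERIV_chain2[OF a_deriv lg.sig_dx[OF t]])
  thus "DD 2 0 x t = b (lg.sig x t) * inverse (J (lg.sig x t) t)"
    using d2 DERIV_unique unfolding D10 by blast
  have d3: "((\<lambda>y. DD 1 0 x y) has_real_derivative DD 1 1 x t) (at t within Y T0)" using sdt[OF t, of 1 0 x] by simp
  have "((\<lambda>y. a (lg.sig x y)) has_real_derivative b (lg.sig x t) * ((-1) * qt (lg.sig x t) t * inverse (J (lg.sig x t) t)))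
      (at t within Y T0)"
    by (rule DERIV_chain2[OF a_deriv lg.sig_dt[OF t]])
  hence "((\<lambda>y. DD 1 0 x y) has_real_derivative b (lg.sig x t) * ((-1) * qt (lg.sig x t) t * inverse (J (lg.sig x t) t)))
      (at t within Y T0)"
  proof (rule has_field_derivative_transform_within[where d=1])
    fix y assume "y \<in> Y T0" thus "a (lg.sig x y) = DD 1 0 x y"
    proof -
      assume y: "y \<in> Y T0"
      have "((\<lambda>x. DD 0 0 x y) has_real_derivative DD 1 0 x y) (at x)" using sdx[OF y, of 0 0 x] by simp
      moreover have "((\<lambda>x. G (lg.sig x y) y) has_real_derivative a (lg.sig x y) * J (lg.sig x y) y * inverse (J (lg.sig x y) y)) (at x)"
        by (rule DERIV_chain2[OF _ lg.sig_dx[OF y]]) (use G_dx y in \<open>auto simp: dx_ok_def\<close>)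
      moreover have "J (lg.sig x y) y \<noteq> 0" using J_pos[OF y] by (metis less_irrefl)
      ultimately have "((\<lambda>x. G (lg.sig x y) y) has_real_derivative a (lg.sig x y)) (at x)"
        by (simp add: mult.assoc)
      thus ?thesis using DERIV_unique \<open>((\<lambda>x. DD 0 0 x y) has_real_derivative DD 1 0 x y) (at x)\<close>
        unfolding V_def by fastforce
    qed
  qed (use t in auto)
  thus "DD 1 1 x t = b (lg.sig x t) * ((-1) * qt (lg.sig x t) t * inverse (J (lg.sig x t) t))"
    using d3 has_field_derivative_unique Y_bot[OF t] by blast
  show "DD 0 0 x t = G (lg.sig x t) t" unfolding V_def by simp
qed

lemma main:
  "\<exists>D. smooth_derivs T0 D \<and>
     (\<forall>x. D 0 0 x 0 = F0 u0 u1 x) \<and>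
     (\<forall>(x,t) \<in> strip T0. 2 * D 1 1 x t + D 0 0 x t * D 2 0 x t - D 1 0 x t * D 2 0 x t = 0) \<and>
     (\<forall>(x,t) \<in> strip T0. x > M \<longrightarrow> D 0 0 x t = 0)"
proof (intro exI[of _ DD] conjI ballI allI impI)
  show "smooth_derivs T0 DD" by (rule DD_sd)
next
  fix x show "DD 0 0 x 0 = F0 u0 u1 x" unfolding V_def by (simp add: sig0 G0)
next
  fix p assume p: "p \<in> strip T0"
  obtain x t where xt: "p = (x,t)" by (cases p)
  have t: "t \<in> Y T0" using p xt by simp
  define s where "s = lg.sig x t"
  note f = DD_facts[of x t, folded s_def]
  have id: "2 * qt s t = G s t - a s" by (rule lag_ident[OF t])
  have "2 * DD 1 1 x t + DD 0 0 x t * DD 2 0 x t - DD 1 0 x t * DD 2 0 x t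
      = b s * inverse (J s t) * (G s t - a s - 2 * qt s t)"
    using f p xt by (simp add: algebra_simps)
  also have "\<dots> = 0" using id by simp
  finally show "case p of (x, t) \<Rightarrow> 2 * DD 1 1 x t + DD 0 0 x t * DD 2 0 x t - DD 1 0 x t * DD 2 0 x t = 0"
    using xt by simp
next
  fix p assume p: "p \<in> strip T0"
  obtain x t where xt: "p = (x,t)" by (cases p)
  have t: "t \<in> Y T0" using p xt by simp
  show "case p of (x, t) \<Rightarrow> M < x \<longrightarrow> DD 0 0 x t = 0"
  proof (unfold xt, clarify)
    assume xM: "M < x"
    have "lg.sig x t = x" by (rule lg.sig_eq[OF t q_right]) (use xM in auto)
    moreover have "G x t = 0"
    proof -
      have "integral {x..K} (\<lambda>y. a y * J y t) = integral {x..K} (\<lambda>y. 0)"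
        by (rule integral_cong) (use a_out xM in auto)
      thus ?thesis unfolding G_def by simp
    qed
    ultimately show "DD 0 0 x t = 0" unfolding V_def by simp
  qed
qed

end

theorem lemma2p1:
  fixes u0 u1 :: "real^3 \<Rightarrow> real" and M :: real
  assumes "M > 0"
    and "smooth u0" and "smooth u1"
    and "radial u0" and "radial u1"
    and "\<forall>x. norm x > M \<longrightarrow> u0 x = 0"
    and "\<forall>x. norm x > M \<longrightarrow> u1 x = 0"
  shows "\<exists>D. smooth_derivs (tau0 (F0 u0 u1) M) D \<and>
     (\<forall>q. D 0 0 q 0 = F0 u0 u1 q) \<and>
     (\<forall>(q,t) \<in> strip (tau0 (F0 u0 u1) M).
         2 * D 1 1 q t + D 0 0 q t * D 2 0 q t - D 1 0 q t * D 2 0 q t = 0) \<and>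
     (\<forall>(q,t) \<in> strip (tau0 (F0 u0 u1) M). q > M \<longrightarrow> D 0 0 q t = 0)"
proof -
  interpret data u0 u1 M using assms by unfold_locales auto
  show ?thesis using main unfolding T0_def .
qed

end
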